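(* Let $\mathcal{F}$ be a homomorphism distinguishing closed class of simple graphs. Then $\mathcal{F}$ is minor-closed if and only if $\equiv_{\mathcal{F}}$ is preserved under taking complements, i.e.\ for all simple graphs $G$ and $H$ it holds that $G\equiv_{\mathcal{F}} H$ if and only if $\overline{G}\equiv_{\mathcal{F}}\overline{H}$.
   Context: All graphs are finite, undirected, without multiple edges; simple means without loops. $\hom(F,G)$ denotes the number of homomorphisms from $F$ to $G$ (maps on vertices preserving adjacency and loops). For a class $\mathcal{F}$ of graphs, $G\equiv_{\mathcal{F}}H$ means $\hom(F,G)=\hom(F,H)$ for all $F\in\mathcal{F}$. The homomorphism distinguishing closure $\mathrm{cl}(\mathcal{F})$ is the class of all simple graphs $K$ such that for all simple graphs $G,H$, $G\equiv_{\mathcal{F}}H$ implies $\hom(K,G)=\hom(K,H)$; $\mathcal{F}$ is homomorphism distinguishing closed if $\mathrm{cl}(\mathcal{F})=\mathcal{F}$. $\overline{G}$ denotes the complement of a simple graph $G$ (same vertices, $E(\overline G)=\binom{V(G)}{2}\setminus E(G)$). A minor of a simple graph $F$ is a subgraph of a graph obtained from $F$ by contracting edges, where $F'$ is obtained from $F$ by contracting edges if there is a partition $\mathcal{P}$ of $V(F)$ with $F[P]$ connected for all $P\in\mathcal{P}$ and $F'\cong F/\mathcal{P}$ (the quotient with vertex set $\mathcal{P}$ and an edge $PQ$, $P\ne Q$, iff some $p\in P$, $q\in Q$ are adjacent in $F$). *)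

theory Defs
  imports "HOL-Library.FuncSet"
begin

type_synonym 'a graph = "'a set \<times> 'a set set"

definition verts :: "'a graph \<Rightarrow> 'a set" where "verts G = fst G"
definition edges :: "'a graph \<Rightarrow> 'a set set" where "edges G = snd G"

definition simple_graph :: "'a graph \<Rightarrow> bool" where
  "simple_graph G \<longleftrightarrow> finite (verts G) \<and>
     (\<forall>e\<in>edges G. \<exists>u v. u \<noteq> v \<and> u \<in> verts G \<and> v \<in> verts G \<and> e = {u, v})"

definition homs :: "'a graph \<Rightarrow> 'b graph \<Rightarrow> ('a \<Rightarrow> 'b) set" where
  "homs F G = {f \<in> verts F \<rightarrow>\<^sub>E verts G.
      \<forall>u\<in>verts F. \<forall>v\<in>verts F. {u, v} \<in> edges F \<longrightarrow> {f u, f v} \<in> edges G}"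

definition hom_count :: "'a graph \<Rightarrow> 'b graph \<Rightarrow> nat" where
  "hom_count F G = card (homs F G)"

text \<open>Graph classes are sets of graphs on vertex type nat (every finite graph
  is isomorphic to one of these).\<close>
definition hom_equiv :: "nat graph set \<Rightarrow> nat graph \<Rightarrow> nat graph \<Rightarrow> bool" where
  "hom_equiv \<F> G H \<longleftrightarrow> (\<forall>F\<in>\<F>. hom_count F G = hom_count F H)"

definition hom_closure :: "nat graph set \<Rightarrow> nat graph set" where
  "hom_closure \<F> = {K. simple_graph K \<and>
     (\<forall>G H. simple_graph G \<longrightarrow> simple_graph H \<longrightarrow> hom_equiv \<F> G H \<longrightarrow>
            hom_count K G = hom_count K H)}"

definition hom_dist_closed :: "nat graph set \<Rightarrow> bool" where
  "hom_dist_closed \<F> \<longleftrightarrow> hom_closure \<F> = \<F>"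

definition complement :: "'a graph \<Rightarrow> 'a graph" where
  "complement G = (verts G,
     {{u, v} | u v. u \<in> verts G \<and> v \<in> verts G \<and> u \<noteq> v \<and> {u, v} \<notin> edges G})"

definition graph_iso :: "'a graph \<Rightarrow> 'b graph \<Rightarrow> bool" where
  "graph_iso A B \<longleftrightarrow> (\<exists>f. bij_betw f (verts A) (verts B) \<and>
     (\<forall>u\<in>verts A. \<forall>v\<in>verts A. {u, v} \<in> edges A \<longleftrightarrow> {f u, f v} \<in> edges B))"

definition subgraph :: "'a graph \<Rightarrow> 'a graph \<Rightarrow> bool" where
  "subgraph S G \<longleftrightarrow> simple_graph S \<and> verts S \<subseteq> verts G \<and> edges S \<subseteq> edges G"

definition is_partition :: "'a set set \<Rightarrow> 'a set \<Rightarrow> bool" where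
  "is_partition \<P> V \<longleftrightarrow> \<Union>\<P> = V \<and> {} \<notin> \<P> \<and>
     (\<forall>P\<in>\<P>. \<forall>Q\<in>\<P>. P \<noteq> Q \<longrightarrow> P \<inter> Q = {})"

definition induced_connected :: "'a graph \<Rightarrow> 'a set \<Rightarrow> bool" where
  "induced_connected F P \<longleftrightarrow> P \<noteq> {} \<and> P \<subseteq> verts F \<and>
     (\<forall>u\<in>P. \<forall>v\<in>P. (\<lambda>x y. x \<in> P \<and> y \<in> P \<and> {x, y} \<in> edges F)\<^sup>*\<^sup>* u v)"

definition quotient_graph :: "'a graph \<Rightarrow> 'a set set \<Rightarrow> 'a set graph" where
  "quotient_graph F \<P> = (\<P>,
     {{P, Q} | P Q. P \<in> \<P> \<and> Q \<in> \<P> \<and> P \<noteq> Q \<and>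
        (\<exists>p\<in>P. \<exists>q\<in>Q. {p, q} \<in> edges F)})"

definition is_minor :: "'b graph \<Rightarrow> 'a graph \<Rightarrow> bool" where
  "is_minor M F \<longleftrightarrow> (\<exists>\<P> S. is_partition \<P> (verts F) \<and>
     (\<forall>P\<in>\<P>. induced_connected F P) \<and>
     subgraph S (quotient_graph F \<P>) \<and> graph_iso M S)"

definition minor_closed :: "nat graph set \<Rightarrow> bool" where
  "minor_closed \<F> \<longleftrightarrow> (\<forall>F\<in>\<F>. \<forall>M. simple_graph M \<longrightarrow> is_minor M F \<longrightarrow> M \<in> \<F>)"

end

theory Submission
  imports Defs "HOL-Library.Nat_Bijection"
begin


lemma simple_edge:
  assumes "simple_graph G" "e \<in> edges G"
  obtains u v where "u \<noteq> v" "u \<in> verts G" "v \<in> verts G" "e = {u, v}"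
  using assms unfolding simple_graph_def by blast

lemma simple_edge_mem:
  assumes "simple_graph G" "{u, v} \<in> edges G"
  shows "u \<noteq> v" "u \<in> verts G" "v \<in> verts G"
proof -
  obtain a b where "a \<noteq> b" "a \<in> verts G" "b \<in> verts G" "{u, v} = {a, b}"
    using simple_edge[OF assms] by metis
  then show "u \<noteq> v" "u \<in> verts G" "v \<in> verts G"
    by (auto simp: doubleton_eq_iff)
qed

lemma simple_no_loop: "simple_graph G \<Longrightarrow> {a} \<notin> edges G"
  using simple_edge_mem[of G a a] by auto

lemma simple_finite_edges:
  assumes "simple_graph G" shows "finite (edges G)"
proof -
  have "edges G \<subseteq> Pow (verts G)" using assms unfolding simple_graph_def by auto
  moreover have "finite (verts G)" using assms unfolding simple_graph_def by auto
  ultimately show ?thesis by (meson finite_Pow_iff finite_subset)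
qed

lemma finite_homs: "finite (verts F) \<Longrightarrow> finite (verts X) \<Longrightarrow> finite (homs F X)"
  unfolding homs_def by (rule finite_subset[OF _ finite_PiE]) auto

definition psiset :: "'a graph \<Rightarrow> 'a set set \<Rightarrow> 'a set set \<Rightarrow> 'b graph \<Rightarrow> ('a \<Rightarrow> 'b) set" where
  "psiset F T A X = {g \<in> verts F \<rightarrow>\<^sub>E verts X. (\<forall>e\<in>T. \<exists>a. g ` e = {a}) \<and> (\<forall>e\<in>A - T. g ` e \<in> edges X)}"

definition psi :: "'a graph \<Rightarrow> 'a set set \<Rightarrow> 'a set set \<Rightarrow> 'b graph \<Rightarrow> nat" where
  "psi F T A X = card (psiset F T A X)"

lemma finite_psiset: "finite (verts F) \<Longrightarrow> finite (verts X) \<Longrightarrow> finite (psiset F T A X)"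
  unfolding psiset_def by (rule finite_subset[OF _ finite_PiE]) auto

lemma psiset_alt:
  assumes "simple_graph F" "T \<subseteq> A" "A \<subseteq> edges F"
  shows "psiset F T A X = {g \<in> verts F \<rightarrow>\<^sub>E verts X. \<forall>u\<in>verts F. \<forall>v\<in>verts F.
            ({u, v} \<in> T \<longrightarrow> g u = g v) \<and> ({u, v} \<in> A - T \<longrightarrow> {g u, g v} \<in> edges X)}"
  (is "?L = ?R")
proof
  show "?L \<subseteq> ?R"
  proof
    fix g assume g: "g \<in> ?L"
    show "g \<in> ?R" unfolding mem_Collect_eq
    proof (intro conjI ballI impI)
      show "g \<in> verts F \<rightarrow>\<^sub>E verts X" using g unfolding psiset_def by auto
    next
      fix u v assume "u \<in> verts F" "v \<in> verts F" "{u, v} \<in> T"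
      then obtain a where "g ` {u, v} = {a}" using g unfolding psiset_def by blast
      then show "g u = g v" by auto
    next
      fix u v assume "u \<in> verts F" "v \<in> verts F" "{u, v} \<in> A - T"
      then have "g ` {u, v} \<in> edges X" using g unfolding psiset_def by blast
      then show "{g u, g v} \<in> edges X" by simp
    qed
  qed
next
  show "?R \<subseteq> ?L"
  proof
    fix g assume g: "g \<in> ?R"
    show "g \<in> ?L" unfolding psiset_def mem_Collect_eq
    proof (intro conjI ballI)
      show "g \<in> verts F \<rightarrow>\<^sub>E verts X" using g by auto
    next
      fix e assume "e \<in> T"
      then obtain u v where uv: "u \<in> verts F" "v \<in> verts F" "e = {u, v}"
        using simple_edge[OF assms(1)] assms by blast
      then have "g u = g v" using g \<open>e \<in> T\<close> by auto
      then show "\<exists>a. g ` e = {a}" using uv by auto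
    next
      fix e assume "e \<in> A - T"
      then obtain u v where uv: "u \<in> verts F" "v \<in> verts F" "e = {u, v}"
        using simple_edge[OF assms(1)] assms by blast
      then show "g ` e \<in> edges X" using g \<open>e \<in> A - T\<close> by auto
    qed
  qed
qed

lemma homs_psiset:
  assumes "simple_graph F"
  shows "homs F X = psiset F {} (edges F) X"
  using psiset_alt[OF assms, of "{}" "edges F" X] unfolding homs_def by auto

lemma hom_count_psi: "simple_graph F \<Longrightarrow> hom_count F X = psi F {} (edges F) X"
  unfolding hom_count_def psi_def using homs_psiset by metis


definition pg :: "nat graph \<Rightarrow> nat graph \<Rightarrow> nat graph" where
  "pg X L = (prod_encode ` (verts X \<times> verts L),
     {{prod_encode (a, b), prod_encode (c, d)} | a b c d. a \<in> verts X \<and> c \<in> verts X \<and>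
        b \<in> verts L \<and> d \<in> verts L \<and> {a, c} \<in> edges X \<and> {b, d} \<in> edges L})"

lemma verts_pg: "verts (pg X L) = prod_encode ` (verts X \<times> verts L)"
  unfolding pg_def verts_def by simp

lemma pg_edge:
  "{prod_encode (a, b), prod_encode (c, d)} \<in> edges (pg X L) \<longleftrightarrow>
     a \<in> verts X \<and> c \<in> verts X \<and> b \<in> verts L \<and> d \<in> verts L \<and> {a, c} \<in> edges X \<and> {b, d} \<in> edges L"
proof
  assume "{prod_encode (a, b), prod_encode (c, d)} \<in> edges (pg X L)"
  then obtain a' b' c' d' where eq: "{prod_encode (a, b), prod_encode (c, d)} = {prod_encode (a', b'), prod_encode (c', d')}"
    and p: "a' \<in> verts X \<and> c' \<in> verts X \<and> b' \<in> verts L \<and> d' \<in> verts L \<and> {a', c'} \<in> edges X \<and> {b', d'} \<in> edges L"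
    unfolding pg_def edges_def by auto
  from eq have "(a = a' \<and> b = b' \<and> c = c' \<and> d = d') \<or> (a = c' \<and> b = d' \<and> c = a' \<and> d = b')"
    by (auto simp: doubleton_eq_iff)
  then show "a \<in> verts X \<and> c \<in> verts X \<and> b \<in> verts L \<and> d \<in> verts L \<and> {a, c} \<in> edges X \<and> {b, d} \<in> edges L"
    using p by (auto simp: insert_commute)
next
  assume "a \<in> verts X \<and> c \<in> verts X \<and> b \<in> verts L \<and> d \<in> verts L \<and> {a, c} \<in> edges X \<and> {b, d} \<in> edges L"
  then show "{prod_encode (a, b), prod_encode (c, d)} \<in> edges (pg X L)"
    unfolding pg_def edges_def by auto
qed

lemma simple_pg:
  assumes "simple_graph X" "finite (verts L)"
  shows "simple_graph (pg X L)"
  unfolding simple_graph_def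
proof (intro conjI ballI)
  show "finite (verts (pg X L))" using assms unfolding verts_pg simple_graph_def by auto
next
  fix e assume "e \<in> edges (pg X L)"
  then obtain a b c d where e: "e = {prod_encode (a, b), prod_encode (c, d)}" and
    p: "a \<in> verts X \<and> c \<in> verts X \<and> b \<in> verts L \<and> d \<in> verts L \<and> {a, c} \<in> edges X \<and> {b, d} \<in> edges L"
    unfolding pg_def edges_def by auto
  have "a \<noteq> c" using simple_edge_mem[OF assms(1)] p by blast
  then show "\<exists>u v. u \<noteq> v \<and> u \<in> verts (pg X L) \<and> v \<in> verts (pg X L) \<and> e = {u, v}"
    using e p unfolding verts_pg by (intro exI[of _ "prod_encode (a, b)"] exI[of _ "prod_encode (c, d)"]) auto
qed

lemma verts_complement[simp]: "verts (complement X) = verts X"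
  unfolding complement_def verts_def by simp

lemma compl_edge:
  assumes "u \<in> verts X" "v \<in> verts X"
  shows "{u, v} \<in> edges (complement X) \<longleftrightarrow> u \<noteq> v \<and> {u, v} \<notin> edges X"
proof
  assume "{u, v} \<in> edges (complement X)"
  then obtain u' v' where "{u, v} = {u', v'}" "u' \<noteq> v'" "{u', v'} \<notin> edges X"
    unfolding complement_def edges_def verts_def by auto
  then show "u \<noteq> v \<and> {u, v} \<notin> edges X" by (auto simp: doubleton_eq_iff insert_commute)
next
  assume "u \<noteq> v \<and> {u, v} \<notin> edges X"
  then show "{u, v} \<in> edges (complement X)"
    using assms unfolding complement_def edges_def verts_def by auto
qed

lemma simple_complement:
  assumes "simple_graph X" shows "simple_graph (complement X)"
  using assms unfolding simple_graph_def complement_def verts_def edges_def by auto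

lemma complement_complement:
  assumes "simple_graph X" shows "complement (complement X) = X"
proof -
  have "edges (complement (complement X)) = edges X"
  proof
    show "edges (complement (complement X)) \<subseteq> edges X"
    proof
      fix e assume "e \<in> edges (complement (complement X))"
      then obtain u v where "u \<in> verts X" "v \<in> verts X" "u \<noteq> v" "{u, v} \<notin> edges (complement X)" "e = {u, v}"
        unfolding complement_def[of "complement X"] edges_def[of "(_, _)"] verts_complement by auto
      then show "e \<in> edges X" using compl_edge by metis
    qed
  next
    show "edges X \<subseteq> edges (complement (complement X))"
    proof
      fix e assume "e \<in> edges X"
      then obtain u v where uv: "u \<noteq> v" "u \<in> verts X" "v \<in> verts X" "e = {u, v}"
        using simple_edge[OF assms] by blast
      then have "{u, v} \<notin> edges (complement X)" using compl_edge \<open>e \<in> edges X\<close> by metis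
      then show "e \<in> edges (complement (complement X))"
        using uv unfolding complement_def[of "complement X"] edges_def[of "(_, _)"] verts_complement by auto
    qed
  qed
  then show ?thesis
    by (metis verts_complement edges_def verts_def prod.collapse)
qed

lemma card_PiE_encode:
  assumes "finite I" "finite A" "finite B"
  shows "card {f \<in> I \<rightarrow>\<^sub>E prod_encode ` (A \<times> B). P f} =
    (\<Sum>h\<in>I \<rightarrow>\<^sub>E B. card {g \<in> I \<rightarrow>\<^sub>E A. P (\<lambda>x\<in>I. prod_encode (g x, h x))})"
proof -
  let ?S = "Sigma (I \<rightarrow>\<^sub>E B) (\<lambda>h. {g \<in> I \<rightarrow>\<^sub>E A. P (\<lambda>x\<in>I. prod_encode (g x, h x))})"
  let ?m = "\<lambda>(h, g). (\<lambda>x\<in>I. prod_encode (g x, h x))"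
  have fin: "finite (I \<rightarrow>\<^sub>E B)" using assms by (simp add: finite_PiE)
  have fin2: "\<And>h. finite {g \<in> I \<rightarrow>\<^sub>E A. P (\<lambda>x\<in>I. prod_encode (g x, h x))}"
    using assms by (auto intro: finite_subset[OF _ finite_PiE])
  have "bij_betw ?m ?S {f \<in> I \<rightarrow>\<^sub>E prod_encode ` (A \<times> B). P f}"
  proof (rule bij_betw_byWitness[where f' = "\<lambda>f. (\<lambda>x\<in>I. snd (prod_decode (f x)), \<lambda>x\<in>I. fst (prod_decode (f x)))"])
    show "\<forall>a\<in>?S. (\<lambda>f. (\<lambda>x\<in>I. snd (prod_decode (f x)), \<lambda>x\<in>I. fst (prod_decode (f x)))) (?m a) = a"
    proof
      fix a assume "a \<in> ?S"
      then obtain h g where a: "a = (h, g)" "h \<in> I \<rightarrow>\<^sub>E B" "g \<in> I \<rightarrow>\<^sub>E A" by auto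
      have "(\<lambda>x\<in>I. snd (prod_decode ((\<lambda>x\<in>I. prod_encode (g x, h x)) x))) = h"
        using a(2) by (auto simp: fun_eq_iff PiE_def extensional_def)
      moreover have "(\<lambda>x\<in>I. fst (prod_decode ((\<lambda>x\<in>I. prod_encode (g x, h x)) x))) = g"
        using a(3) by (auto simp: fun_eq_iff PiE_def extensional_def)
      ultimately show "(\<lambda>f. (\<lambda>x\<in>I. snd (prod_decode (f x)), \<lambda>x\<in>I. fst (prod_decode (f x)))) (?m a) = a"
        using a(1) by simp
    qed
  next
    show "\<forall>f\<in>{f \<in> I \<rightarrow>\<^sub>E prod_encode ` (A \<times> B). P f}.
        ?m ((\<lambda>f. (\<lambda>x\<in>I. snd (prod_decode (f x)), \<lambda>x\<in>I. fst (prod_decode (f x)))) f) = f"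
    proof
      fix f assume f: "f \<in> {f \<in> I \<rightarrow>\<^sub>E prod_encode ` (A \<times> B). P f}"
      show "?m ((\<lambda>f. (\<lambda>x\<in>I. snd (prod_decode (f x)), \<lambda>x\<in>I. fst (prod_decode (f x)))) f) = f"
        using f by (auto simp: fun_eq_iff PiE_def extensional_def)
    qed
  next
    show "?m ` ?S \<subseteq> {f \<in> I \<rightarrow>\<^sub>E prod_encode ` (A \<times> B). P f}"
      by (auto simp: PiE_def Pi_def)
  next
    show "(\<lambda>f. (\<lambda>x\<in>I. snd (prod_decode (f x)), \<lambda>x\<in>I. fst (prod_decode (f x)))) ` {f \<in> I \<rightarrow>\<^sub>E prod_encode ` (A \<times> B). P f} \<subseteq> ?S"
    proof
      fix p assume "p \<in> (\<lambda>f. (\<lambda>x\<in>I. snd (prod_decode (f x)), \<lambda>x\<in>I. fst (prod_decode (f x)))) ` {f \<in> I \<rightarrow>\<^sub>E prod_encode ` (A \<times> B). P f}"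
      then obtain f where f: "f \<in> I \<rightarrow>\<^sub>E prod_encode ` (A \<times> B)" "P f"
        and p: "p = (\<lambda>x\<in>I. snd (prod_decode (f x)), \<lambda>x\<in>I. fst (prod_decode (f x)))" by auto
      have eq: "(\<lambda>x\<in>I. prod_encode ((\<lambda>x\<in>I. fst (prod_decode (f x))) x, (\<lambda>x\<in>I. snd (prod_decode (f x))) x)) = f"
        using f(1) by (auto simp: fun_eq_iff PiE_def extensional_def)
      show "p \<in> ?S" unfolding p using f eq by (auto simp: PiE_def Pi_def)
    qed
  qed
  then have "card {f \<in> I \<rightarrow>\<^sub>E prod_encode ` (A \<times> B). P f} = card ?S"
    by (simp add: bij_betw_same_card)
  also have "\<dots> = (\<Sum>h\<in>I \<rightarrow>\<^sub>E B. card {g \<in> I \<rightarrow>\<^sub>E A. P (\<lambda>x\<in>I. prod_encode (g x, h x))})"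
    using fin fin2 by (simp add: card_SigmaI)
  finally show ?thesis .
qed


lemma psi_pg:
  fixes F :: "nat graph"
  assumes F: "simple_graph F" and TA: "T \<subseteq> A" "A \<subseteq> edges F"
    and fin: "finite (verts X)" "finite (verts L)"
  shows "psi F T A (pg X L) = psi F T A X * psi F T A L"
proof -
  have finF: "finite (verts F)" using F unfolding simple_graph_def by auto
  define R where "R = (\<lambda>(Z::nat graph) (f::nat \<Rightarrow> nat) u v.
            ({u, v} \<in> T \<longrightarrow> f u = f v) \<and> ({u, v} \<in> A - T \<longrightarrow> {f u, f v} \<in> edges Z))"
  define Q where "Q = (\<lambda>(Z::nat graph) (f::nat \<Rightarrow> nat). \<forall>u\<in>verts F. \<forall>v\<in>verts F. R Z f u v)"
  have ps: "\<And>Z. psiset F T A Z = {g \<in> verts F \<rightarrow>\<^sub>E verts Z. Q Z g}"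
    unfolding Q_def R_def psiset_alt[OF F TA] by (rule refl)
  have key: "\<And>g h. g \<in> verts F \<rightarrow>\<^sub>E verts X \<Longrightarrow> h \<in> verts F \<rightarrow>\<^sub>E verts L \<Longrightarrow>
      Q (pg X L) (\<lambda>x\<in>verts F. prod_encode (g x, h x)) \<longleftrightarrow> Q X g \<and> Q L h"
  proof -
    fix g h assume g: "g \<in> verts F \<rightarrow>\<^sub>E verts X" and h: "h \<in> verts F \<rightarrow>\<^sub>E verts L"
    show "Q (pg X L) (\<lambda>x\<in>verts F. prod_encode (g x, h x)) \<longleftrightarrow> Q X g \<and> Q L h"
    proof -
      have pt: "R (pg X L) (\<lambda>x\<in>verts F. prod_encode (g x, h x)) u v \<longleftrightarrow> R X g u v \<and> R L h u v"
        if uv: "u \<in> verts F" "v \<in> verts F" for u v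
      proof -
        have m: "g u \<in> verts X" "g v \<in> verts X" "h u \<in> verts L" "h v \<in> verts L"
          using g h uv by (auto simp: PiE_iff)
        have r: "(\<lambda>x\<in>verts F. prod_encode (g x, h x)) u = prod_encode (g u, h u)"
             "(\<lambda>x\<in>verts F. prod_encode (g x, h x)) v = prod_encode (g v, h v)" using uv by auto
        show ?thesis unfolding R_def r pg_edge prod_encode_eq prod.inject using m by blast
      qed
      show ?thesis unfolding Q_def using pt by blast
    qed
  qed
  have "psi F T A (pg X L) = card {f \<in> verts F \<rightarrow>\<^sub>E prod_encode ` (verts X \<times> verts L). Q (pg X L) f}"
    unfolding psi_def ps verts_pg ..
  also have "\<dots> = (\<Sum>h\<in>verts F \<rightarrow>\<^sub>E verts L. card {g \<in> verts F \<rightarrow>\<^sub>E verts X. Q (pg X L) (\<lambda>x\<in>verts F. prod_encode (g x, h x))})"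
    by (rule card_PiE_encode[OF finF fin])
  also have "\<dots> = (\<Sum>h\<in>verts F \<rightarrow>\<^sub>E verts L. if Q L h then card {g \<in> verts F \<rightarrow>\<^sub>E verts X. Q X g} else 0)"
  proof (rule sum.cong[OF refl])
    fix h assume h: "h \<in> verts F \<rightarrow>\<^sub>E verts L"
    have "{g \<in> verts F \<rightarrow>\<^sub>E verts X. Q (pg X L) (\<lambda>x\<in>verts F. prod_encode (g x, h x))} =
          (if Q L h then {g \<in> verts F \<rightarrow>\<^sub>E verts X. Q X g} else {})"
      using key[OF _ h] by (auto cong: conj_cong)
    then show "card {g \<in> verts F \<rightarrow>\<^sub>E verts X. Q (pg X L) (\<lambda>x\<in>verts F. prod_encode (g x, h x))} =
        (if Q L h then card {g \<in> verts F \<rightarrow>\<^sub>E verts X. Q X g} else 0)" by simp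
  qed
  also have "\<dots> = (\<Sum>h\<in>{h \<in> verts F \<rightarrow>\<^sub>E verts L. Q L h}. card {g \<in> verts F \<rightarrow>\<^sub>E verts X. Q X g})"
    by (rule sum.inter_filter[symmetric]) (simp add: finite_PiE finF fin)
  also have "\<dots> = psi F T A X * psi F T A L"
    unfolding psi_def ps by (simp add: mult.commute)
  finally show ?thesis .
qed

lemma hom_count_pg:
  fixes F :: "nat graph"
  assumes F: "simple_graph F" and fin: "finite (verts X)" "finite (verts L)"
  shows "hom_count F (pg X L) = hom_count F X * psi F {} (edges F) L"
  using psi_pg[OF F _ _ fin, of "{}" "edges F"] by (simp add: hom_count_psi[OF F])


definition loopg :: "nat graph \<Rightarrow> nat set set \<Rightarrow> nat graph" where
  "loopg F A0 = (verts F, (\<lambda>b. {b}) ` verts F \<union> A0)"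

definition Ygr :: "nat graph \<Rightarrow> nat set set \<Rightarrow> nat graph \<Rightarrow> nat graph" where
  "Ygr F A0 X = complement (pg (complement X) (loopg F A0))"

definition Ane :: "nat graph \<Rightarrow> nat set set \<Rightarrow> (nat \<Rightarrow> nat) \<Rightarrow> nat set set" where
  "Ane F A0 h = {e \<in> edges F. h ` e \<in> A0}"

definition Ah :: "nat graph \<Rightarrow> nat set set \<Rightarrow> (nat \<Rightarrow> nat) \<Rightarrow> nat set set" where
  "Ah F A0 h = {e \<in> edges F. h ` e \<in> edges (loopg F A0)}"

lemma loopg_edge:
  assumes "b \<in> verts F" "d \<in> verts F"
  shows "{b, d} \<in> edges (loopg F A0) \<longleftrightarrow> b = d \<or> {b, d} \<in> A0"
  using assms unfolding loopg_def edges_def by (auto simp: doubleton_eq_iff)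

lemma Ygr_edge:
  assumes "a \<in> verts X" "c \<in> verts X" "b \<in> verts F" "d \<in> verts F"
  shows "{prod_encode (a, b), prod_encode (c, d)} \<in> edges (Ygr F A0 X) \<longleftrightarrow>
    (a \<noteq> c \<or> b \<noteq> d) \<and> \<not> (a \<noteq> c \<and> {a, c} \<notin> edges X \<and> (b = d \<or> {b, d} \<in> A0))"
proof -
  have vl: "verts (loopg F A0) = verts F" unfolding loopg_def verts_def by simp
  have m: "prod_encode (a, b) \<in> verts (pg (complement X) (loopg F A0))"
          "prod_encode (c, d) \<in> verts (pg (complement X) (loopg F A0))"
    using assms unfolding verts_pg vl by auto
  show ?thesis
    unfolding Ygr_def compl_edge[OF m] pg_edge compl_edge[OF assms(1,2)] verts_complement vl
      loopg_edge[OF assms(3,4)] prod_encode_eq prod.inject using assms by blast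
qed

lemma Ygr_expand:
  fixes F :: "nat graph"
  assumes F: "simple_graph F" and A0: "A0 \<subseteq> edges F" and X: "simple_graph X"
  shows "hom_count F (Ygr F A0 X) =
    (\<Sum>h\<in>verts F \<rightarrow>\<^sub>E verts F. \<Sum>T\<in>Pow (Ane F A0 h). psi F T (Ah F A0 h) X)"
proof -
  have finF: "finite (verts F)" using F unfolding simple_graph_def by auto
  have finX: "finite (verts X)" using X unfolding simple_graph_def by auto
  have vY: "verts (Ygr F A0 X) = prod_encode ` (verts X \<times> verts F)"
    unfolding Ygr_def verts_complement verts_pg by (simp add: loopg_def verts_def)
  define cond where "cond = (\<lambda>(g::nat\<Rightarrow>nat) (h::nat\<Rightarrow>nat) u v.
     (g u \<noteq> g v \<or> h u \<noteq> h v) \<and> \<not> (g u \<noteq> g v \<and> {g u, g v} \<notin> edges X \<and> (h u = h v \<or> {h u, h v} \<in> A0)))"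
  define C where "C = (\<lambda>h. {g \<in> verts F \<rightarrow>\<^sub>E verts X. \<forall>u\<in>verts F. \<forall>v\<in>verts F. {u, v} \<in> edges F \<longrightarrow> cond g h u v})"
  have homsY: "homs F (Ygr F A0 X) = {f \<in> verts F \<rightarrow>\<^sub>E prod_encode ` (verts X \<times> verts F).
      \<forall>u\<in>verts F. \<forall>v\<in>verts F. {u, v} \<in> edges F \<longrightarrow> {f u, f v} \<in> edges (Ygr F A0 X)}"
    unfolding homs_def vY ..
  have step1: "hom_count F (Ygr F A0 X) = (\<Sum>h\<in>verts F \<rightarrow>\<^sub>E verts F. card {g \<in> verts F \<rightarrow>\<^sub>E verts X.
      \<forall>u\<in>verts F. \<forall>v\<in>verts F. {u, v} \<in> edges F \<longrightarrow>
        {(\<lambda>x\<in>verts F. prod_encode (g x, h x)) u, (\<lambda>x\<in>verts F. prod_encode (g x, h x)) v} \<in> edges (Ygr F A0 X)})"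
    unfolding hom_count_def homsY by (rule card_PiE_encode[OF finF finX finF])
  have step2: "{g \<in> verts F \<rightarrow>\<^sub>E verts X.
      \<forall>u\<in>verts F. \<forall>v\<in>verts F. {u, v} \<in> edges F \<longrightarrow>
        {(\<lambda>x\<in>verts F. prod_encode (g x, h x)) u, (\<lambda>x\<in>verts F. prod_encode (g x, h x)) v} \<in> edges (Ygr F A0 X)}
      = C h" if h: "h \<in> verts F \<rightarrow>\<^sub>E verts F" for h
  proof -
    have "\<And>g u v. g \<in> verts F \<rightarrow>\<^sub>E verts X \<Longrightarrow> u \<in> verts F \<Longrightarrow> v \<in> verts F \<Longrightarrow>
       {(\<lambda>x\<in>verts F. prod_encode (g x, h x)) u, (\<lambda>x\<in>verts F. prod_encode (g x, h x)) v} \<in> edges (Ygr F A0 X)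
       \<longleftrightarrow> cond g h u v"
    proof -
      fix g u v assume g: "g \<in> verts F \<rightarrow>\<^sub>E verts X" and uv: "u \<in> verts F" "v \<in> verts F"
      have m: "g u \<in> verts X" "g v \<in> verts X" "h u \<in> verts F" "h v \<in> verts F"
        using g h uv by (auto simp: PiE_iff)
      show "{(\<lambda>x\<in>verts F. prod_encode (g x, h x)) u, (\<lambda>x\<in>verts F. prod_encode (g x, h x)) v} \<in> edges (Ygr F A0 X)
       \<longleftrightarrow> cond g h u v"
        using uv unfolding cond_def by (simp only: restrict_apply' Ygr_edge[OF m])
    qed
    note pt = this
    show ?thesis unfolding C_def
    proof (rule Collect_cong, rule conj_cong[OF refl])
      fix g assume g: "g \<in> verts F \<rightarrow>\<^sub>E verts X"
      show "(\<forall>u\<in>verts F. \<forall>v\<in>verts F. {u, v} \<in> edges F \<longrightarrow>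
        {(\<lambda>x\<in>verts F. prod_encode (g x, h x)) u, (\<lambda>x\<in>verts F. prod_encode (g x, h x)) v} \<in> edges (Ygr F A0 X)) =
        (\<forall>u\<in>verts F. \<forall>v\<in>verts F. {u, v} \<in> edges F \<longrightarrow> cond g h u v)"
        by (simp only: pt[OF g] cong: ball_cong)
    qed
  qed
  have step3: "card (C h) = (\<Sum>T\<in>Pow (Ane F A0 h). psi F T (Ah F A0 h) X)" if h: "h \<in> verts F \<rightarrow>\<^sub>E verts F" for h
  proof -
    have AneAh: "Ane F A0 h \<subseteq> Ah F A0 h"
      unfolding Ane_def Ah_def loopg_def edges_def by auto
    have AhE: "Ah F A0 h \<subseteq> edges F" unfolding Ah_def by auto
    have hv: "h u \<in> verts F" if "u \<in> verts F" for u using h that by (auto simp: PiE_iff)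
    have memAh: "{u, v} \<in> Ah F A0 h \<longleftrightarrow> h u = h v \<or> {h u, h v} \<in> A0"
      if "{u, v} \<in> edges F" for u v
      using that loopg_edge[OF hv hv, of u v] simple_edge_mem[OF F that] unfolding Ah_def by auto
    have memAne: "{u, v} \<in> Ane F A0 h \<longleftrightarrow> {h u, h v} \<in> A0"
      if "{u, v} \<in> edges F" for u v
      using that unfolding Ane_def by auto
    have A0ne: "{a, b} \<in> A0 \<Longrightarrow> a \<noteq> b" for a b using A0 simple_edge_mem[OF F] by blast
    have Xne: "{a, b} \<in> edges X \<Longrightarrow> a \<noteq> b" for a b using simple_edge_mem[OF X] by blast
    have ps: "psiset F T (Ah F A0 h) X =
       {g \<in> verts F \<rightarrow>\<^sub>E verts X. \<forall>u\<in>verts F. \<forall>v\<in>verts F.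
            ({u, v} \<in> T \<longrightarrow> g u = g v) \<and> ({u, v} \<in> Ah F A0 h - T \<longrightarrow> {g u, g v} \<in> edges X)}"
      if "T \<subseteq> Ane F A0 h" for T
      by (rule psiset_alt[OF F subset_trans[OF that AneAh] AhE])
    have union: "C h = (\<Union>T\<in>Pow (Ane F A0 h). psiset F T (Ah F A0 h) X)"
    proof
      show "C h \<subseteq> (\<Union>T\<in>Pow (Ane F A0 h). psiset F T (Ah F A0 h) X)"
      proof
        fix g assume g: "g \<in> C h"
        define Tg where "Tg = {e \<in> Ane F A0 h. \<exists>a. g ` e = {a}}"
        have "Tg \<subseteq> Ane F A0 h" unfolding Tg_def by auto
        moreover have "g \<in> psiset F Tg (Ah F A0 h) X"
          unfolding ps[OF \<open>Tg \<subseteq> Ane F A0 h\<close>] mem_Collect_eq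
        proof (intro conjI ballI)
          show "g \<in> verts F \<rightarrow>\<^sub>E verts X" using g unfolding C_def by auto
        next
          fix u v assume uv: "u \<in> verts F" "v \<in> verts F"
          show "{u, v} \<in> Tg \<longrightarrow> g u = g v" unfolding Tg_def by auto
          show "{u, v} \<in> Ah F A0 h - Tg \<longrightarrow> {g u, g v} \<in> edges X"
          proof
            assume a: "{u, v} \<in> Ah F A0 h - Tg"
            then have e: "{u, v} \<in> edges F" using AhE by auto
            have c: "cond g h u v" using g uv e unfolding C_def by auto
            show "{g u, g v} \<in> edges X"
            proof (cases "h u = h v")
              case True then show ?thesis using c unfolding cond_def by auto
            next
              case False
              then have "{h u, h v} \<in> A0" using a memAh[OF e] by auto
              then have "{u, v} \<in> Ane F A0 h" using memAne[OF e] by auto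
              then have "g u \<noteq> g v" using a unfolding Tg_def by auto
              then show ?thesis using c \<open>{h u, h v} \<in> A0\<close> unfolding cond_def by auto
            qed
          qed
        qed
        ultimately show "g \<in> (\<Union>T\<in>Pow (Ane F A0 h). psiset F T (Ah F A0 h) X)"
          using UN_I[of Tg "Pow (Ane F A0 h)" g "\<lambda>T. psiset F T (Ah F A0 h) X"] by simp
      qed
    next
      show "(\<Union>T\<in>Pow (Ane F A0 h). psiset F T (Ah F A0 h) X) \<subseteq> C h"
      proof
        fix g assume "g \<in> (\<Union>T\<in>Pow (Ane F A0 h). psiset F T (Ah F A0 h) X)"
        then obtain T where T: "T \<subseteq> Ane F A0 h" and g: "g \<in> psiset F T (Ah F A0 h) X" by auto
        note g' = g[unfolded ps[OF T]]
        show "g \<in> C h" unfolding C_def mem_Collect_eq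
        proof (intro conjI ballI impI)
          show "g \<in> verts F \<rightarrow>\<^sub>E verts X" using g' by auto
        next
          fix u v assume uv: "u \<in> verts F" "v \<in> verts F" and e: "{u, v} \<in> edges F"
          show "cond g h u v"
          proof (cases "{u, v} \<in> Ah F A0 h")
            case False
            then have "h u \<noteq> h v" "{h u, h v} \<notin> A0" using memAh[OF e] by auto
            then show ?thesis unfolding cond_def by auto
          next
            case True
            show ?thesis
            proof (cases "{u, v} \<in> T")
              case True
              then have "g u = g v" using g' uv by auto
              moreover have "{h u, h v} \<in> A0" using True T memAne[OF e] by auto
              ultimately show ?thesis using A0ne unfolding cond_def by auto
            next
              case False
              then have "{g u, g v} \<in> edges X" using g' uv \<open>{u, v} \<in> Ah F A0 h\<close> by auto
              then show ?thesis using Xne unfolding cond_def by auto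
            qed
          qed
        qed
      qed
    qed
    have disj: "\<forall>T1\<in>Pow (Ane F A0 h). \<forall>T2\<in>Pow (Ane F A0 h). T1 \<noteq> T2 \<longrightarrow>
        psiset F T1 (Ah F A0 h) X \<inter> psiset F T2 (Ah F A0 h) X = {}"
    proof (intro ballI impI)
      fix T1 T2 assume T1: "T1 \<in> Pow (Ane F A0 h)" and T2: "T2 \<in> Pow (Ane F A0 h)" and ne: "T1 \<noteq> T2"
      show "psiset F T1 (Ah F A0 h) X \<inter> psiset F T2 (Ah F A0 h) X = {}"
      proof (rule ccontr)
        assume "psiset F T1 (Ah F A0 h) X \<inter> psiset F T2 (Ah F A0 h) X \<noteq> {}"
        then obtain g where g1: "g \<in> psiset F T1 (Ah F A0 h) X" and g2: "g \<in> psiset F T2 (Ah F A0 h) X" by auto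
        have gen: "False" if a1: "e \<in> Ta" and a2: "e \<notin> Tb" and a3: "Ta \<subseteq> Ane F A0 h"
          and a5: "g \<in> psiset F Ta (Ah F A0 h) X" and a6: "g \<in> psiset F Tb (Ah F A0 h) X" for e Ta Tb
        proof -
          obtain a where ga: "g ` e = {a}" using a1 a5 unfolding psiset_def by blast
          have "e \<in> Ah F A0 h - Tb" using a1 a2 a3 AneAh by blast
          then have "g ` e \<in> edges X" using a6 unfolding psiset_def by blast
          then show False using simple_no_loop[OF X] ga by metis
        qed
        from ne obtain e where "(e \<in> T1 \<and> e \<notin> T2) \<or> (e \<in> T2 \<and> e \<notin> T1)" by blast
        then show False
        proof
          assume "e \<in> T1 \<and> e \<notin> T2" then show False using gen[of e T1 T2] T1 g1 g2 by blast
        next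
          assume "e \<in> T2 \<and> e \<notin> T1" then show False using gen[of e T2 T1] T2 g1 g2 by blast
        qed
      qed
    qed
    have "card (C h) = (\<Sum>T\<in>Pow (Ane F A0 h). card (psiset F T (Ah F A0 h) X))"
      unfolding union
    proof (rule card_UN_disjoint)
      show "finite (Pow (Ane F A0 h))" using simple_finite_edges[OF F] unfolding Ane_def by auto
      show "\<forall>i\<in>Pow (Ane F A0 h). finite (psiset F i (Ah F A0 h) X)" using finite_psiset finF finX by blast
      show "\<forall>i\<in>Pow (Ane F A0 h). \<forall>j\<in>Pow (Ane F A0 h). i \<noteq> j \<longrightarrow>
          psiset F i (Ah F A0 h) X \<inter> psiset F j (Ah F A0 h) X = {}" using disj by blast
    qed
    then show ?thesis unfolding psi_def .
  qed
  show ?thesis unfolding step1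
  proof (rule sum.cong[OF refl])
    fix h assume h: "h \<in> verts F \<rightarrow>\<^sub>E verts F"
    show "card {g \<in> verts F \<rightarrow>\<^sub>E verts X.
      \<forall>u\<in>verts F. \<forall>v\<in>verts F. {u, v} \<in> edges F \<longrightarrow>
        {(\<lambda>x\<in>verts F. prod_encode (g x, h x)) u, (\<lambda>x\<in>verts F. prod_encode (g x, h x)) v} \<in> edges (Ygr F A0 X)}
      = (\<Sum>T\<in>Pow (Ane F A0 h). psi F T (Ah F A0 h) X)"
      unfolding step2[OF h] by (rule step3[OF h])
  qed
qed


lemma artin_core:
  fixes \<Phi> :: "('x \<Rightarrow> int) set"
  assumes fin: "finite \<Phi>"
    and mult: "\<forall>x\<in>S. \<forall>y\<in>S. \<exists>z\<in>S. \<forall>\<phi>\<in>\<Phi>. \<phi> z = \<phi> x * \<phi> y"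
    and outside: "\<forall>\<phi>\<in>\<Phi>. \<forall>x. x \<notin> S \<longrightarrow> \<phi> x = 0"
    and phi0: "\<phi>0 \<in> \<Phi>" "x0 \<in> S" "\<phi>0 x0 \<noteq> 0"
  shows "\<forall>b. card {\<phi>\<in>\<Phi>. b \<phi> \<noteq> 0} = n \<longrightarrow> (\<forall>x\<in>S. (\<Sum>\<phi>\<in>\<Phi>. b \<phi> * \<phi> x) = 0) \<longrightarrow> b \<phi>0 = 0"
proof (induction n rule: less_induct)
  case (less n)
  show ?case
  proof (intro allI impI)
    fix b :: "('x \<Rightarrow> int) \<Rightarrow> int"
    assume cn: "card {\<phi>\<in>\<Phi>. b \<phi> \<noteq> 0} = n" and rel: "\<forall>x\<in>S. (\<Sum>\<phi>\<in>\<Phi>. b \<phi> * \<phi> x) = 0"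
    show "b \<phi>0 = 0"
    proof (rule ccontr)
      assume b0: "b \<phi>0 \<noteq> 0"
      show False
      proof (cases "\<exists>\<phi>1\<in>\<Phi>. \<phi>1 \<noteq> \<phi>0 \<and> b \<phi>1 \<noteq> 0")
        case False
        then have "(\<Sum>\<phi>\<in>\<Phi>. b \<phi> * \<phi> x0) = b \<phi>0 * \<phi>0 x0"
          using fin phi0(1) by (subst sum.remove[of _ \<phi>0]) (auto intro!: sum.neutral)
        then show False using rel phi0 b0 by auto
      next
        case True
        then obtain \<phi>1 where p1: "\<phi>1 \<in> \<Phi>" "\<phi>1 \<noteq> \<phi>0" "b \<phi>1 \<noteq> 0" by blast
        from p1(2) obtain y where y: "\<phi>0 y \<noteq> \<phi>1 y" unfolding fun_eq_iff by metis
        have yS: "y \<in> S"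
        proof (rule ccontr)
          assume "y \<notin> S"
          then have "\<phi>0 y = 0" "\<phi>1 y = 0" using outside p1(1) phi0(1) by auto
          then show False using y by simp
        qed
        define b' where "b' = (\<lambda>\<phi>. b \<phi> * (\<phi> y - \<phi>1 y))"
        have rel': "\<forall>x\<in>S. (\<Sum>\<phi>\<in>\<Phi>. b' \<phi> * \<phi> x) = 0"
        proof
          fix x assume x: "x \<in> S"
          obtain z where z: "z \<in> S" "\<forall>\<phi>\<in>\<Phi>. \<phi> z = \<phi> x * \<phi> y" using mult x yS by blast
          have "(\<Sum>\<phi>\<in>\<Phi>. b' \<phi> * \<phi> x) = (\<Sum>\<phi>\<in>\<Phi>. b \<phi> * \<phi> z) - \<phi>1 y * (\<Sum>\<phi>\<in>\<Phi>. b \<phi> * \<phi> x)"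
            unfolding b'_def sum_distrib_left sum_subtractf[symmetric]
            by (rule sum.cong[OF refl]) (simp add: z(2) algebra_simps)
          also have "\<dots> = 0" using rel x z(1) by simp
          finally show "(\<Sum>\<phi>\<in>\<Phi>. b' \<phi> * \<phi> x) = 0" .
        qed
        have sub: "{\<phi>\<in>\<Phi>. b' \<phi> \<noteq> 0} \<subseteq> {\<phi>\<in>\<Phi>. b \<phi> \<noteq> 0} - {\<phi>1}"
          unfolding b'_def by auto
        have "card {\<phi>\<in>\<Phi>. b' \<phi> \<noteq> 0} < n"
        proof -
          have "card {\<phi>\<in>\<Phi>. b' \<phi> \<noteq> 0} \<le> card ({\<phi>\<in>\<Phi>. b \<phi> \<noteq> 0} - {\<phi>1})"
            using sub fin by (intro card_mono) auto
          also have "\<dots> < card {\<phi>\<in>\<Phi>. b \<phi> \<noteq> 0}"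
            using p1 fin by (intro card_Diff1_less) auto
          finally show ?thesis using cn by simp
        qed
        then have "b' \<phi>0 = 0" using less.IH rel' by blast
        then show False unfolding b'_def using b0 y by simp
      qed
    qed
  qed
qed

lemma artin:
  fixes \<Phi> :: "('x \<Rightarrow> int) set"
  assumes fin: "finite \<Phi>"
    and mult: "\<forall>x\<in>S. \<forall>y\<in>S. \<exists>z\<in>S. \<forall>\<phi>\<in>\<Phi>. \<phi> z = \<phi> x * \<phi> y"
    and outside: "\<forall>\<phi>\<in>\<Phi>. \<forall>x. x \<notin> S \<longrightarrow> \<phi> x = 0"
    and phi0: "\<phi>0 \<in> \<Phi>" "x0 \<in> S" "\<phi>0 x0 \<noteq> 0"
    and rel: "\<forall>x\<in>S. (\<Sum>\<phi>\<in>\<Phi>. b \<phi> * \<phi> x) = 0"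
  shows "b \<phi>0 = 0"
  using artin_core[OF fin mult outside phi0] rel by blast

lemma artin_app:
  fixes \<psi> :: "'i \<Rightarrow> 'x \<Rightarrow> nat"
  assumes fin: "finite I"
    and mult: "\<forall>x\<in>S. \<forall>y\<in>S. \<exists>z\<in>S. \<forall>i\<in>I. \<psi> i z = \<psi> i x * \<psi> i y"
    and rel: "\<forall>K\<in>S. (\<Sum>i\<in>I. (int (\<psi> i G) - int (\<psi> i H)) * int (\<psi> i K)) = 0"
    and GH: "G \<in> S" "H \<in> S" and i0: "i0 \<in> I"
  shows "\<psi> i0 G = \<psi> i0 H"
proof -
  define \<psi>' where "\<psi>' = (\<lambda>i x. if x \<in> S then int (\<psi> i x) else 0)"
  show ?thesis
  proof (cases "\<exists>x0\<in>S. \<psi>' i0 x0 \<noteq> 0")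
    case False
    then show ?thesis using GH unfolding \<psi>'_def by auto
  next
    case True
    then obtain x0 where x0: "x0 \<in> S" "\<psi>' i0 x0 \<noteq> 0" by blast
    define \<Phi> where "\<Phi> = \<psi>' ` I"
    define b where "b = (\<lambda>\<phi>. \<Sum>i\<in>{i\<in>I. \<psi>' i = \<phi>}. (int (\<psi> i G) - int (\<psi> i H)))"
    have rel2: "\<forall>x\<in>S. (\<Sum>\<phi>\<in>\<Phi>. b \<phi> * \<phi> x) = 0"
    proof
      fix x assume x: "x \<in> S"
      have "(\<Sum>\<phi>\<in>\<Phi>. b \<phi> * \<phi> x) = (\<Sum>\<phi>\<in>\<Phi>. \<Sum>i\<in>{i\<in>I. \<psi>' i = \<phi>}. (int (\<psi> i G) - int (\<psi> i H)) * \<psi>' i x)"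
        unfolding b_def sum_distrib_right by (rule sum.cong[OF refl]) auto
      also have "\<dots> = (\<Sum>i\<in>I. (int (\<psi> i G) - int (\<psi> i H)) * \<psi>' i x)"
        unfolding \<Phi>_def by (rule sum.image_gen[OF fin, symmetric])
      also have "\<dots> = 0" using rel x unfolding \<psi>'_def by simp
      finally show "(\<Sum>\<phi>\<in>\<Phi>. b \<phi> * \<phi> x) = 0" .
    qed
    have "b (\<psi>' i0) = 0"
    proof -
      have f1: "finite \<Phi>" unfolding \<Phi>_def using fin by simp
      have f2: "\<forall>x\<in>S. \<forall>y\<in>S. \<exists>z\<in>S. \<forall>\<phi>\<in>\<Phi>. \<phi> z = \<phi> x * \<phi> y"
      proof (intro ballI)
        fix x y assume xy: "x \<in> S" "y \<in> S"
        then obtain z where z: "z \<in> S" "\<forall>i\<in>I. \<psi> i z = \<psi> i x * \<psi> i y" using mult by blast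
        have "\<forall>\<phi>\<in>\<Phi>. \<phi> z = \<phi> x * \<phi> y"
          unfolding \<Phi>_def \<psi>'_def using z xy by simp
        then show "\<exists>z\<in>S. \<forall>\<phi>\<in>\<Phi>. \<phi> z = \<phi> x * \<phi> y" using z(1) by blast
      qed
      have f3: "\<forall>\<phi>\<in>\<Phi>. \<forall>x. x \<notin> S \<longrightarrow> \<phi> x = 0" unfolding \<Phi>_def \<psi>'_def by auto
      have f4: "\<psi>' i0 \<in> \<Phi>" unfolding \<Phi>_def using i0 by auto
      show ?thesis by (rule artin[OF f1 f2 f3 f4 x0 rel2])
    qed
    moreover have "b (\<psi>' i0) = int (card {i\<in>I. \<psi>' i = \<psi>' i0}) * (int (\<psi> i0 G) - int (\<psi> i0 H))"
    proof -
      have "\<And>i. \<psi>' i = \<psi>' i0 \<Longrightarrow> int (\<psi> i G) - int (\<psi> i H) = int (\<psi> i0 G) - int (\<psi> i0 H)"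
      proof -
        fix i assume "\<psi>' i = \<psi>' i0"
        then have "\<psi>' i G = \<psi>' i0 G" "\<psi>' i H = \<psi>' i0 H" by auto
        then show "int (\<psi> i G) - int (\<psi> i H) = int (\<psi> i0 G) - int (\<psi> i0 H)"
          using GH unfolding \<psi>'_def by simp
      qed
      note * = this
      have "b (\<psi>' i0) = (\<Sum>i\<in>{i\<in>I. \<psi>' i = \<psi>' i0}. int (\<psi> i0 G) - int (\<psi> i0 H))"
        unfolding b_def
      proof (rule sum.cong[OF refl])
        fix i assume "i \<in> {i\<in>I. \<psi>' i = \<psi>' i0}"
        then show "int (\<psi> i G) - int (\<psi> i H) = int (\<psi> i0 G) - int (\<psi> i0 H)" using * by blast
      qed
      also have "\<dots> = int (card {i\<in>I. \<psi>' i = \<psi>' i0}) * (int (\<psi> i0 G) - int (\<psi> i0 H))"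
        by (rule sum_constant)
      finally show ?thesis .
    qed
    moreover have "card {i\<in>I. \<psi>' i = \<psi>' i0} \<noteq> 0" using fin i0 by auto
    ultimately show ?thesis by simp
  qed
qed


lemma hom_equiv_pg:
  assumes simpF: "\<forall>F\<in>Fc. simple_graph F"
    and X: "simple_graph X" and X': "simple_graph X'" and L: "finite (verts L)"
    and eq: "hom_equiv Fc X X'"
  shows "hom_equiv Fc (pg X L) (pg X' L)"
  unfolding hom_equiv_def
proof
  fix F assume F: "F \<in> Fc"
  have fX: "finite (verts X)" "finite (verts X')" using X X' unfolding simple_graph_def by auto
  show "hom_count F (pg X L) = hom_count F (pg X' L)"
    using hom_count_pg[OF simpF[rule_format, OF F] fX(1) L] hom_count_pg[OF simpF[rule_format, OF F] fX(2) L]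
      eq F unfolding hom_equiv_def by simp
qed

lemma verts_loopg[simp]: "verts (loopg F A0) = verts F"
  unfolding loopg_def verts_def by simp

lemma edges_loopg: "edges (loopg F A0) = (\<lambda>b. {b}) ` verts F \<union> A0"
  unfolding loopg_def edges_def by simp

lemma psi_invariant:
  fixes Fc :: "nat graph set" and F0 :: "nat graph"
  assumes simpF: "\<forall>F\<in>Fc. simple_graph F"
    and cp: "\<forall>G H. simple_graph G \<longrightarrow> simple_graph H \<longrightarrow> hom_equiv Fc G H \<longrightarrow>
               hom_equiv Fc (complement G) (complement H)"
    and F0: "F0 \<in> Fc" and A0: "A0 \<subseteq> edges F0" and T0: "T0 \<subseteq> A0"
    and G: "simple_graph G" and H: "simple_graph H" and eq: "hom_equiv Fc G H"
  shows "psi F0 T0 A0 G = psi F0 T0 A0 H"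
proof -
  have sF0: "simple_graph F0" using simpF F0 by blast
  have finF0: "finite (verts F0)" using sF0 unfolding simple_graph_def by auto
  have finv: "finite (verts Z)" if "simple_graph Z" for Z :: "nat graph" using that unfolding simple_graph_def by auto
  define I where "I = Sigma (verts F0 \<rightarrow>\<^sub>E verts F0) (\<lambda>h. Pow (Ane F0 A0 h))"
  define \<psi> where "\<psi> = (\<lambda>(i :: (nat \<Rightarrow> nat) \<times> nat set set) (X :: nat graph). psi F0 (snd i) (Ah F0 A0 (fst i)) X)"
  have finI: "finite I" unfolding I_def
    using finF0 simple_finite_edges[OF sF0] by (auto simp: finite_PiE Ane_def intro!: finite_SigmaI)
  have AneAh: "Ane F0 A0 h \<subseteq> Ah F0 A0 h" for h
    unfolding Ane_def Ah_def loopg_def edges_def by auto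
  have AhE: "Ah F0 A0 h \<subseteq> edges F0" for h unfolding Ah_def by auto
  have psimult: "\<psi> i (pg X K) = \<psi> i X * \<psi> i K" if "i \<in> I" "simple_graph X" "simple_graph K" for i X K
  proof -
    obtain h T where i: "i = (h, T)" "T \<subseteq> Ane F0 A0 h" using \<open>i \<in> I\<close> unfolding I_def by auto
    show ?thesis unfolding \<psi>_def i fst_conv snd_conv
      by (rule psi_pg[OF sF0 subset_trans[OF i(2) AneAh] AhE finv[OF that(2)] finv[OF that(3)]])
  qed
  have expand: "hom_count F0 (Ygr F0 A0 (pg X K)) = (\<Sum>i\<in>I. \<psi> i X * \<psi> i K)"
    if "simple_graph X" "simple_graph K" for X K
  proof -
    have "hom_count F0 (Ygr F0 A0 (pg X K)) =
       (\<Sum>h\<in>verts F0 \<rightarrow>\<^sub>E verts F0. \<Sum>T\<in>Pow (Ane F0 A0 h). psi F0 T (Ah F0 A0 h) (pg X K))"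
      by (rule Ygr_expand[OF sF0 A0 simple_pg[OF that(1) finv[OF that(2)]]])
    also have "\<dots> = (\<Sum>i\<in>I. \<psi> i (pg X K))"
      unfolding I_def \<psi>_def
      by (subst sum.Sigma) (use finF0 simple_finite_edges[OF sF0] in \<open>auto simp: finite_PiE Ane_def case_prod_beta\<close>)
    also have "\<dots> = (\<Sum>i\<in>I. \<psi> i X * \<psi> i K)"
      by (rule sum.cong[OF refl]) (rule psimult[OF _ that])
    finally show ?thesis .
  qed
  have rel: "\<forall>K\<in>{K :: nat graph. simple_graph K}. (\<Sum>i\<in>I. (int (\<psi> i G) - int (\<psi> i H)) * int (\<psi> i K)) = 0"
  proof
    fix K :: "nat graph" assume "K \<in> {K. simple_graph K}"
    then have K: "simple_graph K" by simp
    have sX: "simple_graph (pg G K)" "simple_graph (pg H K)"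
      using simple_pg[OF G finv[OF K]] simple_pg[OF H finv[OF K]] .
    have e1: "hom_equiv Fc (pg G K) (pg H K)" by (rule hom_equiv_pg[OF simpF G H finv[OF K] eq])
    have e2: "hom_equiv Fc (complement (pg G K)) (complement (pg H K))"
      using cp sX e1 by blast
    have sc: "simple_graph (complement (pg G K))" "simple_graph (complement (pg H K))"
      using simple_complement sX by blast+
    have e3: "hom_equiv Fc (pg (complement (pg G K)) (loopg F0 A0)) (pg (complement (pg H K)) (loopg F0 A0))"
      by (rule hom_equiv_pg[OF simpF sc]) (use finF0 e2 in auto)
    have sz: "simple_graph (pg (complement (pg G K)) (loopg F0 A0))" "simple_graph (pg (complement (pg H K)) (loopg F0 A0))"
      using simple_pg[OF sc(1)] simple_pg[OF sc(2)] finF0 by auto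
    have e4: "hom_equiv Fc (Ygr F0 A0 (pg G K)) (Ygr F0 A0 (pg H K))"
      unfolding Ygr_def using cp sz e3 by blast
    then have "hom_count F0 (Ygr F0 A0 (pg G K)) = hom_count F0 (Ygr F0 A0 (pg H K))"
      using F0 unfolding hom_equiv_def by blast
    then have "(\<Sum>i\<in>I. \<psi> i G * \<psi> i K) = (\<Sum>i\<in>I. \<psi> i H * \<psi> i K)"
      using expand[OF G K] expand[OF H K] by simp
    then have "(\<Sum>i\<in>I. int (\<psi> i G) * int (\<psi> i K)) = (\<Sum>i\<in>I. int (\<psi> i H) * int (\<psi> i K))"
      by (metis (no_types, lifting) of_nat_mult of_nat_sum sum.cong)
    then show "(\<Sum>i\<in>I. (int (\<psi> i G) - int (\<psi> i H)) * int (\<psi> i K)) = 0"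
      by (simp add: left_diff_distrib sum_subtractf)
  qed
  have mult: "\<forall>x\<in>{K :: nat graph. simple_graph K}. \<forall>y\<in>{K :: nat graph. simple_graph K}. \<exists>z\<in>{K :: nat graph. simple_graph K}. \<forall>i\<in>I. \<psi> i z = \<psi> i x * \<psi> i y"
  proof (intro ballI)
    fix x y :: "nat graph" assume "x \<in> {K. simple_graph K}" "y \<in> {K. simple_graph K}"
    then have xy: "simple_graph x" "simple_graph y" by auto
    show "\<exists>z\<in>{K. simple_graph K}. \<forall>i\<in>I. \<psi> i z = \<psi> i x * \<psi> i y"
      using simple_pg[OF xy(1) finv[OF xy(2)]] psimult[OF _ xy] by blast
  qed
  define h0 where "h0 = (\<lambda>x\<in>verts F0. x)"
  have img: "h0 ` e = e" if "e \<in> edges F0" for e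
  proof -
    have "e \<subseteq> verts F0" using that sF0 unfolding simple_graph_def by auto
    then show ?thesis unfolding h0_def by auto
  qed
  have Ane0: "Ane F0 A0 h0 = A0" unfolding Ane_def using img A0 by auto
  have Ah0: "Ah F0 A0 h0 = A0"
  proof -
    have "e \<notin> (\<lambda>b. {b}) ` verts F0" if "e \<in> edges F0" for e
      using simple_no_loop[OF sF0] that by auto
    then show ?thesis unfolding Ah_def edges_loopg using img A0 simple_no_loop[OF sF0] by auto
  qed
  have i0: "(h0, T0) \<in> I" unfolding I_def using Ane0 T0 by (auto simp: h0_def)
  have "\<psi> (h0, T0) G = \<psi> (h0, T0) H"
    by (rule artin_app[OF finI mult rel _ _ i0]) (use G H in auto)
  then show ?thesis unfolding \<psi>_def using Ah0 by simp
qed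


lemma verts_pair[simp]: "verts (V, E) = V" unfolding verts_def by simp
lemma edges_pair[simp]: "edges (V, E) = E" unfolding edges_def by simp

definition blk :: "'a set set \<Rightarrow> 'a \<Rightarrow> 'a set" where
  "blk \<P> v = (THE P. P \<in> \<P> \<and> v \<in> P)"

lemma blk_eq:
  assumes "is_partition \<P> V" "P \<in> \<P>" "v \<in> P"
  shows "blk \<P> v = P"
  unfolding blk_def
proof (rule the_equality)
  show "P \<in> \<P> \<and> v \<in> P" using assms by auto
next
  fix Q assume "Q \<in> \<P> \<and> v \<in> Q"
  then show "Q = P" using assms unfolding is_partition_def by blast
qed

lemma blk_mem:
  assumes "is_partition \<P> V" "v \<in> V"
  shows "blk \<P> v \<in> \<P>" "v \<in> blk \<P> v"
proof -
  obtain P where "P \<in> \<P>" "v \<in> P" using assms unfolding is_partition_def by blast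
  then show "blk \<P> v \<in> \<P>" "v \<in> blk \<P> v" using blk_eq[OF assms(1)] by auto
qed

lemma psi_quotient:
  fixes F :: "'a graph" and X :: "'b graph"
  assumes F: "simple_graph F" and part: "is_partition \<P> (verts F)"
    and TE: "T \<subseteq> edges F" and BE: "B \<subseteq> edges F" and disj: "B \<inter> T = {}"
    and coll: "\<And>g :: 'a \<Rightarrow> 'b. (\<forall>e\<in>T. \<exists>a. g ` e = {a}) \<longleftrightarrow> (\<forall>P\<in>\<P>. \<exists>a. g ` P = {a})"
  shows "psi F T (T \<union> B) X = hom_count (\<P>, (\<lambda>e. blk \<P> ` e) ` B) X"
proof -
  let ?S = "(\<P>, (\<lambda>e. blk \<P> ` e) ` B)"
  let ?m = "\<lambda>\<phi>. \<lambda>v\<in>verts F. \<phi> (blk \<P> v)"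
  let ?w = "\<lambda>g. \<lambda>P\<in>\<P>. g (SOME v. v \<in> P)"
  have TB: "(T \<union> B) - T = B" using disj by auto
  have ps: "psiset F T (T \<union> B) X = {g \<in> verts F \<rightarrow>\<^sub>E verts X. (\<forall>e\<in>T. \<exists>a. g ` e = {a}) \<and> (\<forall>e\<in>B. g ` e \<in> edges X)}"
    unfolding psiset_def TB ..
  have ne: "P \<noteq> {}" if "P \<in> \<P>" for P using part that unfolding is_partition_def by auto
  have sub: "P \<subseteq> verts F" if "P \<in> \<P>" for P using part that unfolding is_partition_def by auto
  have some: "(SOME v. v \<in> P) \<in> P" if "P \<in> \<P>" for P using ne[OF that] by (simp add: some_in_eq)
  have const: "g v = g w" if c1: "\<forall>P\<in>\<P>. \<exists>a. g ` P = {a}" and c2: "P \<in> \<P>" and c3: "v \<in> P" and c4: "w \<in> P" for g :: "'a \<Rightarrow> 'b" and P v w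
  proof -
    obtain a where "g ` P = {a}" using c1 c2 by blast
    then show ?thesis using c3 c4 by (metis imageI singletonD)
  qed
  have edge_form: "\<exists>u v. u \<in> verts F \<and> v \<in> verts F \<and> e = {u, v}" if "e \<in> B" for e
    using simple_edge[OF F] BE that by blast
  have homsS: "homs ?S X = {\<phi> \<in> \<P> \<rightarrow>\<^sub>E verts X. \<forall>P\<in>\<P>. \<forall>Q\<in>\<P>. {P, Q} \<in> (\<lambda>e. blk \<P> ` e) ` B \<longrightarrow> {\<phi> P, \<phi> Q} \<in> edges X}"
    unfolding homs_def by simp
  have "bij_betw ?m (homs ?S X) (psiset F T (T \<union> B) X)"
  proof (rule bij_betw_byWitness[where f' = ?w])
    show "\<forall>\<phi>\<in>homs ?S X. ?w (?m \<phi>) = \<phi>"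
    proof
      fix \<phi> assume \<phi>: "\<phi> \<in> homs ?S X"
      show "?w (?m \<phi>) = \<phi>"
      proof
        fix P show "?w (?m \<phi>) P = \<phi> P"
        proof (cases "P \<in> \<P>")
          case True
          then have "blk \<P> (SOME v. v \<in> P) = P" using blk_eq[OF part True some[OF True]] by simp
          then show ?thesis using True some[OF True] sub[OF True] by auto
        next
          case False
          then show ?thesis using \<phi> unfolding homsS by (auto simp: PiE_def extensional_def)
        qed
      qed
    qed
  next
    show "\<forall>g\<in>psiset F T (T \<union> B) X. ?m (?w g) = g"
    proof
      fix g assume g: "g \<in> psiset F T (T \<union> B) X"
      then have c: "\<forall>P\<in>\<P>. \<exists>a. g ` P = {a}" using coll[of g] unfolding ps by simp
      show "?m (?w g) = g"
      proof
        fix v show "?m (?w g) v = g v"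
        proof (cases "v \<in> verts F")
          case True
          have b: "blk \<P> v \<in> \<P>" "v \<in> blk \<P> v" using blk_mem[OF part True] by auto
          have "g (SOME w. w \<in> blk \<P> v) = g v" using const[OF c b(1) some[OF b(1)] b(2)] .
          then show ?thesis using True b by simp
        next
          case False
          then show ?thesis using g unfolding ps by (auto simp: PiE_def extensional_def)
        qed
      qed
    qed
  next
    show "?m ` homs ?S X \<subseteq> psiset F T (T \<union> B) X"
    proof
      fix g assume "g \<in> ?m ` homs ?S X"
      then obtain \<phi> where \<phi>: "\<phi> \<in> homs ?S X" and g: "g = ?m \<phi>" by blast
      have \<phi>1: "\<phi> \<in> \<P> \<rightarrow>\<^sub>E verts X" using \<phi> unfolding homsS by blast
      have \<phi>2: "\<And>P Q. P \<in> \<P> \<Longrightarrow> Q \<in> \<P> \<Longrightarrow> {P, Q} \<in> (\<lambda>e. blk \<P> ` e) ` B \<Longrightarrow> {\<phi> P, \<phi> Q} \<in> edges X"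
        using \<phi> unfolding homsS by blast
      have gP: "g ` P = {\<phi> P}" if "P \<in> \<P>" for P
      proof -
        have "g v = \<phi> P" if "v \<in> P" for v using blk_eq[OF part \<open>P \<in> \<P>\<close> that] sub[OF \<open>P \<in> \<P>\<close>] that g by auto
        then show ?thesis using ne[OF that] by auto
      qed
      have cT: "\<forall>e\<in>T. \<exists>a. g ` e = {a}"
      proof -
        have "\<forall>P\<in>\<P>. \<exists>a. g ` P = {a}" using gP by blast
        then show ?thesis using coll[of g] by simp
      qed
      show "g \<in> psiset F T (T \<union> B) X" unfolding ps mem_Collect_eq
      proof (intro conjI ballI)
        show "g \<in> verts F \<rightarrow>\<^sub>E verts X" unfolding g restrict_PiE_iff
          using \<phi>1 blk_mem(1)[OF part] by (metis PiE_mem)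
        show "\<And>e. e \<in> T \<Longrightarrow> \<exists>a. g ` e = {a}" using cT by blast
      next
        fix e assume e: "e \<in> B"
        obtain u v where uv: "u \<in> verts F" "v \<in> verts F" "e = {u, v}" using edge_form[OF e] by blast
        have "{blk \<P> u, blk \<P> v} \<in> (\<lambda>e. blk \<P> ` e) ` B" using e uv image_eqI[of "{blk \<P> u, blk \<P> v}" "\<lambda>e. blk \<P> ` e" e B] by simp
        then have "{\<phi> (blk \<P> u), \<phi> (blk \<P> v)} \<in> edges X"
          by (rule \<phi>2[OF blk_mem(1)[OF part uv(1)] blk_mem(1)[OF part uv(2)]])
        then show "g ` e \<in> edges X" using uv g by simp
      qed
    qed
  next
    show "?w ` psiset F T (T \<union> B) X \<subseteq> homs ?S X"
    proof
      fix \<phi> assume "\<phi> \<in> ?w ` psiset F T (T \<union> B) X"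
      then obtain g where g: "g \<in> psiset F T (T \<union> B) X" and \<phi>: "\<phi> = ?w g" by blast
      have g1: "g \<in> verts F \<rightarrow>\<^sub>E verts X" and g2: "\<forall>e\<in>B. g ` e \<in> edges X" using g unfolding ps by auto
      have c: "\<forall>P\<in>\<P>. \<exists>a. g ` P = {a}" using g coll[of g] unfolding ps by simp
      have \<phi>v: "\<phi> (blk \<P> v) = g v" if "v \<in> verts F" for v
      proof -
        have b: "blk \<P> v \<in> \<P>" "v \<in> blk \<P> v" using blk_mem[OF part that] by auto
        show ?thesis using const[OF c b(1) some[OF b(1)] b(2)] \<phi> b by simp
      qed
      show "\<phi> \<in> homs ?S X" unfolding homsS mem_Collect_eq
      proof (intro conjI ballI impI)
        show "\<phi> \<in> \<P> \<rightarrow>\<^sub>E verts X" using \<phi> g1 some sub by (auto simp: PiE_iff)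
      next
        fix P Q assume PQ: "P \<in> \<P>" "Q \<in> \<P>" "{P, Q} \<in> (\<lambda>e. blk \<P> ` e) ` B"
        then obtain e where e: "e \<in> B" "{P, Q} = blk \<P> ` e" by blast
        obtain u v where uv: "u \<in> verts F" "v \<in> verts F" "e = {u, v}" using edge_form[OF e(1)] by blast
        have "{P, Q} = {blk \<P> u, blk \<P> v}" using e uv by simp
        then have "{\<phi> P, \<phi> Q} = {\<phi> (blk \<P> u), \<phi> (blk \<P> v)}" by (auto simp: doubleton_eq_iff)
        also have "\<dots> = g ` e" using \<phi>v uv by simp
        finally show "{\<phi> P, \<phi> Q} \<in> edges X" using g2 e(1) by simp
      qed
    qed
  qed
  then show ?thesis unfolding psi_def hom_count_def by (simp add: bij_betw_same_card)
qed



lemma hom_count_iso: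
  assumes "graph_iso M S"
  shows "hom_count M X = hom_count S X"
proof -
  obtain f where f: "bij_betw f (verts M) (verts S)"
    and fe: "\<forall>u\<in>verts M. \<forall>v\<in>verts M. {u, v} \<in> edges M \<longleftrightarrow> {f u, f v} \<in> edges S"
    using assms unfolding graph_iso_def by blast
  let ?m = "\<lambda>\<phi>. \<lambda>v\<in>verts M. \<phi> (f v)"
  let ?w = "\<lambda>\<psi>. \<lambda>w\<in>verts S. \<psi> (inv_into (verts M) f w)"
  have inj: "inj_on f (verts M)" and img: "f ` verts M = verts S" using f unfolding bij_betw_def by auto
  have iv: "inv_into (verts M) f w \<in> verts M" "f (inv_into (verts M) f w) = w" if "w \<in> verts S" for w
    using that img by (auto intro: inv_into_into f_inv_into_f)
  have vi: "inv_into (verts M) f (f v) = v" if "v \<in> verts M" for v using inj that by simp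
  have "bij_betw ?m (homs S X) (homs M X)"
  proof (rule bij_betw_byWitness[where f' = ?w])
    show "\<forall>\<phi>\<in>homs S X. ?w (?m \<phi>) = \<phi>"
    proof
      fix \<phi> assume "\<phi> \<in> homs S X"
      then have "\<phi> \<in> extensional (verts S)" unfolding homs_def by (auto simp: PiE_def)
      then show "?w (?m \<phi>) = \<phi>" using iv by (auto simp: fun_eq_iff extensional_def)
    qed
  next
    show "\<forall>\<psi>\<in>homs M X. ?m (?w \<psi>) = \<psi>"
    proof
      fix \<psi> assume "\<psi> \<in> homs M X"
      then have "\<psi> \<in> extensional (verts M)" unfolding homs_def by (auto simp: PiE_def)
      then show "?m (?w \<psi>) = \<psi>" using vi img by (auto simp: fun_eq_iff extensional_def)
    qed
  next
    show "?m ` homs S X \<subseteq> homs M X"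
    proof
      fix \<psi> assume "\<psi> \<in> ?m ` homs S X"
      then obtain \<phi> where \<phi>: "\<phi> \<in> homs S X" and \<psi>: "\<psi> = ?m \<phi>" by blast
      show "\<psi> \<in> homs M X" unfolding homs_def mem_Collect_eq
      proof (intro conjI ballI impI)
        show "\<psi> \<in> verts M \<rightarrow>\<^sub>E verts X" using \<phi> img \<psi> unfolding homs_def by (auto simp: PiE_iff)
      next
        fix u v assume uv: "u \<in> verts M" "v \<in> verts M" "{u, v} \<in> edges M"
        then have "{f u, f v} \<in> edges S" using fe by blast
        then have "{\<phi> (f u), \<phi> (f v)} \<in> edges X" using \<phi> uv img unfolding homs_def by blast
        then show "{\<psi> u, \<psi> v} \<in> edges X" using \<psi> uv by simp
      qed
    qed
  next
    show "?w ` homs M X \<subseteq> homs S X"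
    proof
      fix \<phi> assume "\<phi> \<in> ?w ` homs M X"
      then obtain \<psi> where \<psi>: "\<psi> \<in> homs M X" and \<phi>: "\<phi> = ?w \<psi>" by blast
      show "\<phi> \<in> homs S X" unfolding homs_def mem_Collect_eq
      proof (intro conjI ballI impI)
        show "\<phi> \<in> verts S \<rightarrow>\<^sub>E verts X" using \<psi> iv \<phi> unfolding homs_def by (auto simp: PiE_iff)
      next
        fix u v assume uv: "u \<in> verts S" "v \<in> verts S" "{u, v} \<in> edges S"
        then have "{inv_into (verts M) f u, inv_into (verts M) f v} \<in> edges M"
          using fe iv by metis
        then have "{\<psi> (inv_into (verts M) f u), \<psi> (inv_into (verts M) f v)} \<in> edges X"
          using \<psi> iv uv unfolding homs_def by blast
        then show "{\<phi> u, \<phi> v} \<in> edges X" using \<phi> uv by simp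
      qed
    qed
  qed
  then show ?thesis unfolding hom_count_def by (simp add: bij_betw_same_card)
qed

lemma nat_copy:
  fixes S :: "'a graph"
  assumes S: "simple_graph S"
  shows "\<exists>M :: nat graph. simple_graph M \<and> graph_iso M S"
proof -
  have "finite (verts S)" using S unfolding simple_graph_def by auto
  then obtain b where b: "bij_betw b {0..<card (verts S)} (verts S)" using ex_bij_betw_nat_finite by blast
  define n where "n = card (verts S)"
  define M :: "nat graph" where "M = ({0..<n}, {{i, j} | i j. i < n \<and> j < n \<and> {b i, b j} \<in> edges S})"
  have bi: "b i \<in> verts S" if "i < n" for i using b that unfolding n_def bij_betw_def by auto
  have "graph_iso M S" unfolding graph_iso_def
  proof (intro exI conjI)
    show "bij_betw b (verts M) (verts S)" using b unfolding M_def n_def by simp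
    show "\<forall>u\<in>verts M. \<forall>v\<in>verts M. ({u, v} \<in> edges M) = ({b u, b v} \<in> edges S)"
    proof (intro ballI iffI)
      fix u v assume "u \<in> verts M" "v \<in> verts M" "{u, v} \<in> edges M"
      then obtain i j where "{u, v} = {i, j}" "{b i, b j} \<in> edges S" unfolding M_def by auto
      then show "{b u, b v} \<in> edges S" by (auto simp: doubleton_eq_iff insert_commute)
    next
      fix u v assume "u \<in> verts M" "v \<in> verts M" "{b u, b v} \<in> edges S"
      then show "{u, v} \<in> edges M" unfolding M_def by auto
    qed
  qed
  moreover have "simple_graph M" unfolding simple_graph_def
  proof (intro conjI ballI)
    show "finite (verts M)" unfolding M_def by simp
  next
    fix e assume "e \<in> edges M"
    then obtain i j where ij: "e = {i, j}" "i < n" "j < n" "{b i, b j} \<in> edges S" unfolding M_def by auto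
    then have "b i \<noteq> b j" using simple_edge_mem[OF S] by blast
    then have "i \<noteq> j" by auto
    then show "\<exists>u v. u \<noteq> v \<and> u \<in> verts M \<and> v \<in> verts M \<and> e = {u, v}" using ij unfolding M_def by auto
  qed
  ultimately show ?thesis by blast
qed

lemma hom_count_pad:
  assumes fin: "finite D" and dis: "D \<inter> V = {}" and EV: "\<forall>u v. {u, v} \<in> E \<longrightarrow> u \<in> V \<and> v \<in> V"
  shows "hom_count (V \<union> D, E) X = hom_count (V, E) X * card (verts X) ^ card D"
  using fin dis
proof (induction D rule: finite_induct)
  case empty
  then show ?case by simp
next
  case (insert w D)
  have wV: "w \<notin> V" "w \<notin> D" using insert by auto
  have IH: "hom_count (V \<union> D, E) X = hom_count (V, E) X * card (verts X) ^ card D"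
    using insert by auto
  let ?H = "homs (V \<union> D, E) X"
  let ?m = "\<lambda>(f, a). f(w := a)"
  let ?w = "\<lambda>f. (f(w := undefined), f w)"
  have eqV: "V \<union> insert w D = insert w (V \<union> D)" by auto
  have "bij_betw ?m (?H \<times> verts X) (homs (insert w (V \<union> D), E) X)"
  proof (rule bij_betw_byWitness[where f' = ?w])
    show "\<forall>a\<in>?H \<times> verts X. ?w (?m a) = a"
    proof
      fix a assume "a \<in> ?H \<times> verts X"
      then obtain f x where a: "a = (f, x)" "f \<in> ?H" by auto
      then have "f w = undefined" using wV unfolding homs_def by (auto simp: PiE_def extensional_def)
      then show "?w (?m a) = a" using a by auto
    qed
  next
    show "\<forall>f\<in>homs (insert w (V \<union> D), E) X. ?m (?w f) = f" by auto
  next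
    show "?m ` (?H \<times> verts X) \<subseteq> homs (insert w (V \<union> D), E) X"
    proof
      fix g assume "g \<in> ?m ` (?H \<times> verts X)"
      then obtain f x where fx: "f \<in> ?H" "x \<in> verts X" "g = f(w := x)" by auto
      show "g \<in> homs (insert w (V \<union> D), E) X" unfolding homs_def mem_Collect_eq
      proof (intro conjI ballI impI)
        show "g \<in> verts (insert w (V \<union> D), E) \<rightarrow>\<^sub>E verts X"
          using fx unfolding homs_def by (auto simp: PiE_iff extensional_def)
      next
        fix u v assume uv: "u \<in> verts (insert w (V \<union> D), E)" "v \<in> verts (insert w (V \<union> D), E)"
          "{u, v} \<in> edges (insert w (V \<union> D), E)"
        then have "u \<in> V" "v \<in> V" using EV by auto
        then show "{g u, g v} \<in> edges X" using fx uv wV unfolding homs_def by auto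
      qed
    qed
  next
    show "?w ` homs (insert w (V \<union> D), E) X \<subseteq> ?H \<times> verts X"
    proof
      fix p assume "p \<in> ?w ` homs (insert w (V \<union> D), E) X"
      then obtain f where f: "f \<in> homs (insert w (V \<union> D), E) X" and p: "p = ?w f" by blast
      have "f(w := undefined) \<in> ?H" unfolding homs_def mem_Collect_eq
      proof (intro conjI ballI impI)
        show "f(w := undefined) \<in> verts (V \<union> D, E) \<rightarrow>\<^sub>E verts X"
          using f wV unfolding homs_def by (auto simp: PiE_iff extensional_def)
      next
        fix u v assume uv: "u \<in> verts (V \<union> D, E)" "v \<in> verts (V \<union> D, E)" "{u, v} \<in> edges (V \<union> D, E)"
        then have "u \<in> V" "v \<in> V" using EV by auto
        then show "{(f(w := undefined)) u, (f(w := undefined)) v} \<in> edges X"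
          using f uv wV unfolding homs_def by auto
      qed
      moreover have "f w \<in> verts X" using f unfolding homs_def by (auto simp: PiE_iff)
      ultimately show "p \<in> ?H \<times> verts X" using p by simp
    qed
  qed
  then have "hom_count (insert w (V \<union> D), E) X = card (?H \<times> verts X)"
    unfolding hom_count_def by (simp add: bij_betw_same_card)
  also have "\<dots> = hom_count (V \<union> D, E) X * card (verts X)"
    unfolding hom_count_def by (simp add: card_cartesian_product)
  finally show ?case unfolding eqV IH using insert by simp
qed


lemma psi_empty: "finite (verts F) \<Longrightarrow> psi F {} {} X = card (verts X) ^ card (verts F)"
  unfolding psi_def psiset_def by (simp add: card_PiE)

lemma graph_eqI: "verts G = verts H \<Longrightarrow> edges G = edges H \<Longrightarrow> G = H"
  unfolding verts_def edges_def by (simp add: prod_eq_iff)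

lemma minor_in_closure:
  fixes Fc :: "nat graph set" and F0 M :: "nat graph"
  assumes hdc: "hom_dist_closed Fc"
    and cp: "\<forall>G H. simple_graph G \<longrightarrow> simple_graph H \<longrightarrow> hom_equiv Fc G H \<longrightarrow>
               hom_equiv Fc (complement G) (complement H)"
    and F0: "F0 \<in> Fc" and M: "simple_graph M" and mi: "is_minor M F0"
  shows "M \<in> Fc"
proof -
  have Fcl: "Fc = hom_closure Fc" using hdc unfolding hom_dist_closed_def by simp
  have simpF: "\<forall>F\<in>Fc. simple_graph F" using Fcl unfolding hom_closure_def by blast
  have sF0: "simple_graph F0" using simpF F0 by blast
  obtain \<P> S where part: "is_partition \<P> (verts F0)" and conn: "\<forall>P\<in>\<P>. induced_connected F0 P"
    and sub: "subgraph S (quotient_graph F0 \<P>)" and iso: "graph_iso M S"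
    using mi unfolding is_minor_def by blast
  have sS: "simple_graph S" and vS: "verts S \<subseteq> \<P>" and eS: "edges S \<subseteq> edges (quotient_graph F0 \<P>)"
    using sub unfolding subgraph_def quotient_graph_def verts_def by auto
  have eq_edges: "edges (quotient_graph F0 \<P>) = {{P, Q} | P Q. P \<in> \<P> \<and> Q \<in> \<P> \<and> P \<noteq> Q \<and>
        (\<exists>p\<in>P. \<exists>q\<in>Q. {p, q} \<in> edges F0)}"
    unfolding quotient_graph_def edges_def by simp
  define T0 where "T0 = {e \<in> edges F0. \<exists>P\<in>\<P>. e \<subseteq> P}"
  define B where "B = {e \<in> edges F0. blk \<P> ` e \<in> edges S}"
  have T0E: "T0 \<subseteq> edges F0" and BE: "B \<subseteq> edges F0" unfolding T0_def B_def by auto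
  have edge_ne: "e \<noteq> {}" if "e \<in> edges F0" for e using simple_edge[OF sF0 that] by auto
  have coll: "(\<forall>e\<in>T0. \<exists>a. g ` e = {a}) \<longleftrightarrow> (\<forall>P\<in>\<P>. \<exists>a. g ` P = {a})" for g :: "nat \<Rightarrow> nat"
  proof
    assume c: "\<forall>e\<in>T0. \<exists>a. g ` e = {a}"
    show "\<forall>P\<in>\<P>. \<exists>a. g ` P = {a}"
    proof
      fix P assume P: "P \<in> \<P>"
      have ic: "induced_connected F0 P" using conn P by blast
      then obtain v0 where v0: "v0 \<in> P" unfolding induced_connected_def by blast
      have "g w = g v0" if w: "w \<in> P" for w
      proof -
        have "\<forall>u\<in>P. \<forall>v\<in>P. (\<lambda>x y. x \<in> P \<and> y \<in> P \<and> {x, y} \<in> edges F0)\<^sup>*\<^sup>* u v"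
          using ic unfolding induced_connected_def by simp
        then have r: "(\<lambda>x y. x \<in> P \<and> y \<in> P \<and> {x, y} \<in> edges F0)\<^sup>*\<^sup>* v0 w"
          using v0 w by blast
        then show ?thesis
        proof (induction rule: rtranclp_induct)
          case base then show ?case by simp
        next
          case (step y z)
          have yz: "y \<in> P" "z \<in> P" "{y, z} \<in> edges F0" using step.hyps(2) by auto
          then have "{y, z} \<in> T0" unfolding T0_def using P by blast
          then obtain a where "g ` {y, z} = {a}" using c by blast
          then have "g z = g y" by auto
          then show ?case using step.IH by simp
        qed
      qed
      then have "g ` P = {g v0}" using v0 by blast
      then show "\<exists>a. g ` P = {a}" by blast
    qed
  next
    assume c: "\<forall>P\<in>\<P>. \<exists>a. g ` P = {a}"
    show "\<forall>e\<in>T0. \<exists>a. g ` e = {a}"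
    proof
      fix e assume e: "e \<in> T0"
      then obtain P where P: "P \<in> \<P>" "e \<subseteq> P" unfolding T0_def by blast
      obtain a where a: "g ` P = {a}" using c P by blast
      have "g ` e \<subseteq> {a}" using a P by auto
      moreover have "g ` e \<noteq> {}" using edge_ne e T0E by auto
      ultimately show "\<exists>a. g ` e = {a}" by blast
    qed
  qed
  have disj: "B \<inter> T0 = {}"
  proof (rule ccontr)
    assume "B \<inter> T0 \<noteq> {}"
    then obtain e where e: "e \<in> B" "e \<in> T0" by blast
    then obtain P where P: "P \<in> \<P>" "e \<subseteq> P" unfolding T0_def by blast
    obtain x where x: "x \<in> e" using edge_ne e(1) BE by blast
    have all: "\<forall>y\<in>e. blk \<P> y = P" using blk_eq[OF part P(1)] P(2) by blast
    have "blk \<P> ` e = {P}"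
    proof
      show "blk \<P> ` e \<subseteq> {P}" using all by blast
      show "{P} \<subseteq> blk \<P> ` e" using all x by (metis empty_subsetI image_eqI insert_subset)
    qed
    then show False using e(1) simple_no_loop[OF sS] unfolding B_def by auto
  qed
  have imgB: "(\<lambda>e. blk \<P> ` e) ` B = edges S"
  proof
    show "(\<lambda>e. blk \<P> ` e) ` B \<subseteq> edges S" unfolding B_def by auto
  next
    show "edges S \<subseteq> (\<lambda>e. blk \<P> ` e) ` B"
    proof
      fix x assume x: "x \<in> edges S"
      then have "x \<in> edges (quotient_graph F0 \<P>)" using eS by blast
      then obtain P Q p q where PQ: "x = {P, Q}" "P \<in> \<P>" "Q \<in> \<P>" "p \<in> P" "q \<in> Q" "{p, q} \<in> edges F0"
        unfolding eq_edges by blast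
      have "blk \<P> ` {p, q} = {P, Q}" using blk_eq[OF part PQ(2,4)] blk_eq[OF part PQ(3,5)] by simp
      then have "{p, q} \<in> B" using PQ x unfolding B_def by simp
      then show "x \<in> (\<lambda>e. blk \<P> ` e) ` B" using \<open>blk \<P> ` {p, q} = {P, Q}\<close> PQ(1) by (metis image_eqI)
    qed
  qed
  have qt: "psi F0 T0 (T0 \<union> B) X = hom_count (\<P>, edges S) X" for X :: "nat graph"
    using psi_quotient[OF sF0 part T0E BE disj coll] imgB by simp
  have finP: "finite \<P>"
  proof -
    have "\<P> \<subseteq> Pow (verts F0)" using part unfolding is_partition_def by auto
    moreover have "finite (verts F0)" using sF0 unfolding simple_graph_def by auto
    ultimately show ?thesis by (meson finite_Pow_iff finite_subset)
  qed
  define D where "D = \<P> - verts S"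
  have EV: "\<forall>u v. {u, v} \<in> edges S \<longrightarrow> u \<in> verts S \<and> v \<in> verts S"
    using simple_edge_mem[OF sS] by blast
  have SD: "verts S \<union> D = \<P>" using vS unfolding D_def by auto
  have pad: "hom_count (\<P>, edges S) X = hom_count S X * card (verts X) ^ card D" for X :: "nat graph"
  proof -
    have "hom_count (verts S \<union> D, edges S) X = hom_count (verts S, edges S) X * card (verts X) ^ card D"
      by (rule hom_count_pad) (use finP EV in \<open>auto simp: D_def\<close>)
    moreover have "(verts S, edges S) = S" by (simp add: verts_def edges_def)
    ultimately show ?thesis using SD by simp
  qed
  have A0E: "T0 \<union> B \<subseteq> edges F0" using T0E BE by auto
  have "hom_count M G = hom_count M H"
    if G: "simple_graph G" and H: "simple_graph H" and eq: "hom_equiv Fc G H" for G H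
  proof -
    have p1: "psi F0 T0 (T0 \<union> B) G = psi F0 T0 (T0 \<union> B) H"
      by (rule psi_invariant[OF simpF cp F0 A0E _ G H eq]) auto
    have p2: "psi F0 {} {} G = psi F0 {} {} H"
      by (rule psi_invariant[OF simpF cp F0 _ _ G H eq]) auto
    have finF0: "finite (verts F0)" using sF0 unfolding simple_graph_def by auto
    have main: "hom_count S G * card (verts G) ^ card D = hom_count S H * card (verts H) ^ card D"
      using p1 unfolding qt pad .
    have "hom_count S G = hom_count S H"
    proof (cases "card D = 0")
      case True then show ?thesis using main by simp
    next
      case False
      then have "D \<noteq> {}" by auto
      then obtain P where "P \<in> \<P>" unfolding D_def by auto
      then have "P \<noteq> {}" "P \<subseteq> verts F0" using part unfolding is_partition_def by auto
      then have "card (verts F0) > 0" using finF0 card_gt_0_iff by blast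
      moreover have "card (verts G) ^ card (verts F0) = card (verts H) ^ card (verts F0)"
        using p2 psi_empty[OF finF0] by metis
      ultimately have cGH: "card (verts G) = card (verts H)" by (meson power_eq_iff_eq_base zero_le)
      show ?thesis
      proof (cases "card (verts G) = 0")
        case False
        then show ?thesis using main cGH by simp
      next
        case True
        have "verts G = {}" "verts H = {}" using True cGH G H unfolding simple_graph_def by auto
        moreover have "edges G = {}" "edges H = {}"
          using \<open>verts G = {}\<close> \<open>verts H = {}\<close> G H unfolding simple_graph_def by auto
        ultimately have "G = H" using graph_eqI by metis
        then show ?thesis by simp
      qed
    qed
    then show ?thesis using hom_count_iso[OF iso, of G] hom_count_iso[OF iso, of H] by simp
  qed
  then have "M \<in> hom_closure Fc" unfolding hom_closure_def using M by blast
  then show ?thesis using Fcl by simp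
qed


lemma rt_sym:
  assumes "(\<lambda>x y. {x, y} \<in> T)\<^sup>*\<^sup>* a b"
  shows "(\<lambda>x y. {x, y} \<in> T)\<^sup>*\<^sup>* b a"
  using assms
proof (induction rule: rtranclp_induct)
  case base then show ?case by simp
next
  case (step y z)
  have "{z, y} \<in> T" using step.hyps(2) by (simp add: insert_commute)
  then show ?case using step.IH by (rule converse_rtranclp_into_rtranclp)
qed

lemma psi_minor:
  fixes F0 :: "nat graph"
  assumes sF0: "simple_graph F0" and TA: "T \<subseteq> A" and AE: "A \<subseteq> edges F0"
  shows "(\<forall>X :: nat graph. simple_graph X \<longrightarrow> psi F0 T A X = 0) \<or>
    (\<exists>M :: nat graph. simple_graph M \<and> is_minor M F0 \<and> (\<forall>X :: nat graph. psi F0 T A X = hom_count M X))"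
proof -
  define Rt where "Rt = (\<lambda>x y. {x, y} \<in> T)\<^sup>*\<^sup>*"
  define cls where "cls = (\<lambda>v. {w. Rt v w})"
  define \<P> where "\<P> = cls ` verts F0"
  have TE: "T \<subseteq> edges F0" using TA AE by auto
  have sym: "Rt b a" if "Rt a b" for a b using rt_sym that unfolding Rt_def by metis
  have trans: "Rt a c" if "Rt a b" "Rt b c" for a b c using that unfolding Rt_def by auto
  have stepT: "Rt a b" if "{a, b} \<in> T" for a b using that unfolding Rt_def by auto
  have inV: "w \<in> verts F0" if r: "Rt v w" and v: "v \<in> verts F0" for v w
    using r[unfolded Rt_def] v
  proof (induction rule: rtranclp_induct)
    case base then show ?case by simp
  next
    case (step y z)
    then show ?case using simple_edge_mem[OF sF0] TE by blast
  qed
  have self: "v \<in> cls v" for v unfolding cls_def Rt_def by simp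
  have cls_eq: "cls v = cls w" if "x \<in> cls v" "x \<in> cls w" for v w x
  proof -
    have "Rt v w" using that sym trans unfolding cls_def by blast
    then show ?thesis unfolding cls_def using sym trans by blast
  qed
  have part: "is_partition \<P> (verts F0)"
    unfolding is_partition_def
  proof (intro conjI ballI impI)
    show "\<Union> \<P> = verts F0"
    proof
      show "\<Union> \<P> \<subseteq> verts F0" unfolding \<P>_def cls_def using inV by blast
      show "verts F0 \<subseteq> \<Union> \<P>" unfolding \<P>_def using self by blast
    qed
    show "{} \<notin> \<P>" unfolding \<P>_def using self by blast
  next
    fix P Q assume "P \<in> \<P>" "Q \<in> \<P>" "P \<noteq> Q"
    then show "P \<inter> Q = {}" unfolding \<P>_def using cls_eq by blast
  qed
  have conn: "\<forall>P\<in>\<P>. induced_connected F0 P"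
  proof
    fix P assume "P \<in> \<P>"
    then obtain v where v: "v \<in> verts F0" "P = cls v" unfolding \<P>_def by blast
    have path: "(\<lambda>x y. x \<in> P \<and> y \<in> P \<and> {x, y} \<in> edges F0)\<^sup>*\<^sup>* u w" if "Rt u w" "u \<in> P" for u w
      using that(1)[unfolded Rt_def] that(2)
    proof (induction rule: rtranclp_induct)
      case base then show ?case by simp
    next
      case (step y z)
      have yP: "y \<in> P" using step.hyps(1) step.prems v trans unfolding cls_def Rt_def by blast
      have zP: "z \<in> P" using yP step.hyps(2) stepT trans v unfolding cls_def by blast
      have "{y, z} \<in> edges F0" using step.hyps(2) TE by blast
      then show ?case using step.IH[OF step.prems] yP zP
        by (simp add: rtranclp.rtrancl_into_rtrancl)
    qed
    show "induced_connected F0 P" unfolding induced_connected_def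
    proof (intro conjI ballI)
      show "P \<noteq> {}" using self v by blast
      show "P \<subseteq> verts F0" using inV v unfolding cls_def by blast
    next
      fix u w assume "u \<in> P" "w \<in> P"
      then have "Rt u w" using v sym trans unfolding cls_def by blast
      then show "(\<lambda>x y. x \<in> P \<and> y \<in> P \<and> {x, y} \<in> edges F0)\<^sup>*\<^sup>* u w" using path \<open>u \<in> P\<close> by blast
    qed
  qed
  have coll: "(\<forall>e\<in>T. \<exists>a. g ` e = {a}) \<longleftrightarrow> (\<forall>P\<in>\<P>. \<exists>a. g ` P = {a})" for g :: "nat \<Rightarrow> nat"
  proof
    assume c: "\<forall>e\<in>T. \<exists>a. g ` e = {a}"
    show "\<forall>P\<in>\<P>. \<exists>a. g ` P = {a}"
    proof
      fix P assume "P \<in> \<P>"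
      then obtain v where v: "P = cls v" unfolding \<P>_def by blast
      have "g w = g v" if "Rt v w" for w
        using that[unfolded Rt_def]
      proof (induction rule: rtranclp_induct)
        case base then show ?case by simp
      next
        case (step y z)
        obtain a where "g ` {y, z} = {a}" using c step.hyps(2) by blast
        then have "g z = g y" by auto
        then show ?case using step.IH by simp
      qed
      then have "\<forall>w\<in>P. g w = g v" using v unfolding cls_def by blast
      then have "g ` P = {g v}" using self v by blast
      then show "\<exists>a. g ` P = {a}" by blast
    qed
  next
    assume c: "\<forall>P\<in>\<P>. \<exists>a. g ` P = {a}"
    show "\<forall>e\<in>T. \<exists>a. g ` e = {a}"
    proof
      fix e assume e: "e \<in> T"
      then obtain u w where uw: "u \<in> verts F0" "w \<in> verts F0" "e = {u, w}"
        using simple_edge[OF sF0] TE by blast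
      obtain a where a: "g ` cls u = {a}" using c uw unfolding \<P>_def by blast
      have "w \<in> cls u" using stepT e uw unfolding cls_def by blast
      then have "g w = a" "g u = a" using a self by blast+
      then show "\<exists>a. g ` e = {a}" using uw by auto
    qed
  qed
  define B where "B = A - T"
  have BE: "B \<subseteq> edges F0" and disj: "B \<inter> T = {}" and TB: "T \<union> B = A" unfolding B_def using AE TA by auto
  have qt: "psi F0 T A X = hom_count (\<P>, (\<lambda>e. blk \<P> ` e) ` B) X" for X :: "nat graph"
    using psi_quotient[OF sF0 part TE BE disj coll] TB by simp
  have blkuv: "blk \<P> ` e = {blk \<P> u, blk \<P> w} \<and> blk \<P> u \<in> \<P> \<and> blk \<P> w \<in> \<P> \<and> u \<in> blk \<P> u \<and> w \<in> blk \<P> w \<and> {u, w} \<in> edges F0"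
    if "e \<in> B" "e = {u, w}" "u \<in> verts F0" "w \<in> verts F0" for e u w
    using that blk_mem[OF part] BE by auto
  show ?thesis
  proof (cases "\<exists>e\<in>B. \<exists>P. blk \<P> ` e = {P}")
    case True
    then obtain e P where eP: "e \<in> B" "blk \<P> ` e = {P}" by blast
    obtain u w where uw: "u \<in> verts F0" "w \<in> verts F0" "e = {u, w}"
      using simple_edge[OF sF0] BE eP(1) by blast
    have P: "P \<in> \<P>" "{P} \<in> (\<lambda>e. blk \<P> ` e) ` B"
      using blkuv[OF eP(1) uw(3,1,2)] eP by (auto simp: image_iff)
    have "psi F0 T A X = 0" if X: "simple_graph X" for X :: "nat graph"
    proof -
      have "homs (\<P>, (\<lambda>e. blk \<P> ` e) ` B) X = {}"
      proof (rule ccontr)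
        assume "homs (\<P>, (\<lambda>e. blk \<P> ` e) ` B) X \<noteq> {}"
        then obtain \<phi> where "\<phi> \<in> homs (\<P>, (\<lambda>e. blk \<P> ` e) ` B) X" by blast
        then have h: "\<forall>u\<in>\<P>. \<forall>v\<in>\<P>. {u, v} \<in> (\<lambda>e. blk \<P> ` e) ` B \<longrightarrow> {\<phi> u, \<phi> v} \<in> edges X"
          unfolding homs_def by simp
        have "{\<phi> P, \<phi> P} \<in> edges X" using h[rule_format, OF P(1) P(1)] P(2) by simp
        then show False using simple_no_loop[OF X] by simp
      qed
      then show ?thesis unfolding qt hom_count_def by simp
    qed
    then show ?thesis by blast
  next
    case False
    define S where "S = (\<P>, (\<lambda>e. blk \<P> ` e) ` B)"
    have finP: "finite \<P>" unfolding \<P>_def using sF0 unfolding simple_graph_def by auto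
    have sS: "simple_graph S" unfolding simple_graph_def S_def verts_pair edges_pair
    proof (intro conjI ballI)
      show "finite \<P>" by (rule finP)
    next
      fix x assume "x \<in> (\<lambda>e. blk \<P> ` e) ` B"
      then obtain e where e: "e \<in> B" "x = blk \<P> ` e" by blast
      obtain u w where uw: "u \<in> verts F0" "w \<in> verts F0" "e = {u, w}"
        using simple_edge[OF sF0] BE e(1) by blast
      note bb = blkuv[OF e(1) uw(3,1,2)]
      have "blk \<P> u \<noteq> blk \<P> w" using False e bb by force
      then show "\<exists>u v. u \<noteq> v \<and> u \<in> \<P> \<and> v \<in> \<P> \<and> x = {u, v}" using bb e by blast
    qed
    have subg: "subgraph S (quotient_graph F0 \<P>)" unfolding subgraph_def
    proof (intro conjI)
      show "simple_graph S" by (rule sS)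
      show "verts S \<subseteq> verts (quotient_graph F0 \<P>)" unfolding S_def quotient_graph_def by simp
      show "edges S \<subseteq> edges (quotient_graph F0 \<P>)"
      proof
        fix x assume "x \<in> edges S"
        then obtain e where e: "e \<in> B" "x = blk \<P> ` e" unfolding S_def by auto
        obtain u w where uw: "u \<in> verts F0" "w \<in> verts F0" "e = {u, w}"
          using simple_edge[OF sF0] BE e(1) by blast
        note bb = blkuv[OF e(1) uw(3,1,2)]
        have "blk \<P> u \<noteq> blk \<P> w" using False e bb by force
        then show "x \<in> edges (quotient_graph F0 \<P>)" unfolding quotient_graph_def edges_pair
          using bb e by blast
      qed
    qed
    obtain M :: "nat graph" where M: "simple_graph M" "graph_iso M S" using nat_copy[OF sS] by blast
    have "is_minor M F0" unfolding is_minor_def using part conn subg M(2) by blast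
    moreover have "\<forall>X :: nat graph. psi F0 T A X = hom_count M X"
    proof
      fix X :: "nat graph"
      have iso': "hom_count M X = hom_count (\<P>, (\<lambda>e. blk \<P> ` e) ` B) X"
        using hom_count_iso[OF M(2), of X] unfolding S_def .
      show "psi F0 T A X = hom_count M X" using qt[of X] iso' by simp
    qed
    ultimately show ?thesis using M(1) by blast
  qed
qed


definition eqadj :: "'b graph \<Rightarrow> ('a \<Rightarrow> 'b) \<Rightarrow> 'a set \<Rightarrow> bool" where
  "eqadj X g e \<longleftrightarrow> (\<exists>a. g ` e = {a}) \<or> g ` e \<in> edges X"

definition gamset :: "'a graph \<Rightarrow> 'a set set \<Rightarrow> 'b graph \<Rightarrow> ('a \<Rightarrow> 'b) set" where
  "gamset F A X = {g \<in> verts F \<rightarrow>\<^sub>E verts X. \<forall>e\<in>A. eqadj X g e}"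

definition betset :: "'a graph \<Rightarrow> 'a set set \<Rightarrow> 'b graph \<Rightarrow> ('a \<Rightarrow> 'b) set" where
  "betset F A X = {g \<in> verts F \<rightarrow>\<^sub>E verts X. \<forall>e\<in>edges F. (e \<in> A \<longleftrightarrow> eqadj X g e)}"

lemma gam_psi:
  assumes X: "simple_graph X" and fin: "finite (verts F)" "finite (verts X)" "finite A"
  shows "card (gamset F A X) = (\<Sum>T\<in>Pow A. psi F T A X)"
proof -
  have un: "gamset F A X = (\<Union>T\<in>Pow A. psiset F T A X)"
  proof
    show "gamset F A X \<subseteq> (\<Union>T\<in>Pow A. psiset F T A X)"
    proof
      fix g assume g: "g \<in> gamset F A X"
      define Tg where "Tg = {e \<in> A. \<exists>a. g ` e = {a}}"
      have "g \<in> psiset F Tg A X"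
        using g unfolding psiset_def gamset_def Tg_def eqadj_def by auto
      moreover have "Tg \<in> Pow A" unfolding Tg_def by auto
      ultimately show "g \<in> (\<Union>T\<in>Pow A. psiset F T A X)" by blast
    qed
  next
    show "(\<Union>T\<in>Pow A. psiset F T A X) \<subseteq> gamset F A X"
    proof
      fix g assume "g \<in> (\<Union>T\<in>Pow A. psiset F T A X)"
      then obtain T where T: "T \<subseteq> A" "g \<in> psiset F T A X" by blast
      show "g \<in> gamset F A X" unfolding gamset_def mem_Collect_eq
      proof (intro conjI ballI)
        show "g \<in> verts F \<rightarrow>\<^sub>E verts X" using T unfolding psiset_def by auto
      next
        fix e assume "e \<in> A"
        then show "eqadj X g e" using T unfolding psiset_def eqadj_def by (cases "e \<in> T") auto
      qed
    qed
  qed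
  have disj: "psiset F T1 A X \<inter> psiset F T2 A X = {}" if t1: "T1 \<in> Pow A" and t2: "T2 \<in> Pow A" and t3: "T1 \<noteq> T2" for T1 T2
  proof (rule ccontr)
    assume "psiset F T1 A X \<inter> psiset F T2 A X \<noteq> {}"
    then obtain g where g1: "g \<in> psiset F T1 A X" and g2: "g \<in> psiset F T2 A X" by blast
    have gen: False if a: "e \<in> Ta" "e \<notin> Tb" "Ta \<subseteq> A" "g \<in> psiset F Ta A X" "g \<in> psiset F Tb A X" for e Ta Tb
    proof -
      obtain c where c: "g ` e = {c}" using a(1,4) unfolding psiset_def by blast
      have "g ` e \<in> edges X" using a(1,2,3,5) unfolding psiset_def by blast
      then show False using c simple_no_loop[OF X] by simp
    qed
    obtain e where "(e \<in> T1 \<and> e \<notin> T2) \<or> (e \<in> T2 \<and> e \<notin> T1)" using t3 by blast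
    then show False using gen g1 g2 t1 t2 by blast
  qed
  have "card (gamset F A X) = (\<Sum>T\<in>Pow A. card (psiset F T A X))"
    unfolding un
    by (rule card_UN_disjoint) (use fin finite_psiset[OF fin(1) fin(2)] disj in auto)
  then show ?thesis unfolding psi_def .
qed

lemma gam_bet:
  assumes fin: "finite (verts F)" "finite (verts X)" "finite (edges F)" and AE: "A \<subseteq> edges F"
  shows "card (gamset F A X) = (\<Sum>B\<in>{B. A \<subseteq> B \<and> B \<subseteq> edges F}. card (betset F B X))"
proof -
  have un: "gamset F A X = (\<Union>B\<in>{B. A \<subseteq> B \<and> B \<subseteq> edges F}. betset F B X)"
  proof
    show "gamset F A X \<subseteq> (\<Union>B\<in>{B. A \<subseteq> B \<and> B \<subseteq> edges F}. betset F B X)"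
    proof
      fix g assume g: "g \<in> gamset F A X"
      define Bg where "Bg = {e \<in> edges F. eqadj X g e}"
      have "g \<in> betset F Bg X" using g unfolding betset_def gamset_def Bg_def by auto
      moreover have "Bg \<in> {B. A \<subseteq> B \<and> B \<subseteq> edges F}" using g AE unfolding Bg_def gamset_def by auto
      ultimately show "g \<in> (\<Union>B\<in>{B. A \<subseteq> B \<and> B \<subseteq> edges F}. betset F B X)" by blast
    qed
  next
    show "(\<Union>B\<in>{B. A \<subseteq> B \<and> B \<subseteq> edges F}. betset F B X) \<subseteq> gamset F A X"
      unfolding betset_def gamset_def using AE by blast
  qed
  have disj: "betset F B1 X \<inter> betset F B2 X = {}"
    if "B1 \<in> {B. A \<subseteq> B \<and> B \<subseteq> edges F}" "B2 \<in> {B. A \<subseteq> B \<and> B \<subseteq> edges F}" "B1 \<noteq> B2" for B1 B2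
  proof (rule ccontr)
    assume "betset F B1 X \<inter> betset F B2 X \<noteq> {}"
    then obtain g where g: "g \<in> betset F B1 X" "g \<in> betset F B2 X" by blast
    have "B1 = B2"
    proof
      show "B1 \<subseteq> B2" using g that(1,2) unfolding betset_def by blast
      show "B2 \<subseteq> B1" using g that(1,2) unfolding betset_def by blast
    qed
    then show False using that(3) by simp
  qed
  have finB: "finite {B. A \<subseteq> B \<and> B \<subseteq> edges F}"
    by (rule finite_subset[of _ "Pow (edges F)"]) (use fin in auto)
  have finb: "finite (betset F B X)" for B
    unfolding betset_def by (rule finite_subset[OF _ finite_PiE]) (use fin in auto)
  show ?thesis unfolding un
    by (rule card_UN_disjoint) (use finB finb disj in auto)
qed

lemma bet_compl:
  assumes F: "simple_graph F"
  shows "hom_count F (complement X) = card (betset F {} X)"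
proof -
  have "homs F (complement X) = betset F {} X"
  proof -
    have pt: "({f u, f v} \<in> edges (complement X)) \<longleftrightarrow> \<not> eqadj X f {u, v}"
      if "f \<in> verts F \<rightarrow>\<^sub>E verts X" "u \<in> verts F" "v \<in> verts F" for f u v
    proof -
      have m: "f u \<in> verts X" "f v \<in> verts X" using that by (auto simp: PiE_iff)
      show ?thesis unfolding compl_edge[OF m] eqadj_def by auto
    qed
    show ?thesis
    proof
      show "homs F (complement X) \<subseteq> betset F {} X"
      proof
        fix f assume f: "f \<in> homs F (complement X)"
        then have f1: "f \<in> verts F \<rightarrow>\<^sub>E verts X" unfolding homs_def by simp
        show "f \<in> betset F {} X" unfolding betset_def mem_Collect_eq
        proof (intro conjI ballI)
          show "f \<in> verts F \<rightarrow>\<^sub>E verts X" by (rule f1)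
        next
          fix e assume e: "e \<in> edges F"
          then obtain u v where uv: "u \<in> verts F" "v \<in> verts F" "e = {u, v}" using simple_edge[OF F] by blast
          then have "{f u, f v} \<in> edges (complement X)" using f e unfolding homs_def by blast
          then show "(e \<in> {}) = eqadj X f e" using pt[OF f1 uv(1,2)] uv by simp
        qed
      qed
    next
      show "betset F {} X \<subseteq> homs F (complement X)"
      proof
        fix f assume f: "f \<in> betset F {} X"
        then have f1: "f \<in> verts F \<rightarrow>\<^sub>E verts X" unfolding betset_def by simp
        show "f \<in> homs F (complement X)" unfolding homs_def mem_Collect_eq
        proof (intro conjI ballI impI)
          show "f \<in> verts F \<rightarrow>\<^sub>E verts (complement X)" using f1 by simp
        next
          fix u v assume uv: "u \<in> verts F" "v \<in> verts F" "{u, v} \<in> edges F"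
          then have "\<not> eqadj X f {u, v}" using f unfolding betset_def by blast
          then show "{f u, f v} \<in> edges (complement X)" using pt[OF f1 uv(1,2)] by simp
        qed
      qed
    qed
  qed
  then show ?thesis unfolding hom_count_def by simp
qed

lemma bet_invariant:
  fixes F :: "nat graph" and G H :: "nat graph"
  assumes F: "simple_graph F" and G: "simple_graph G" and H: "simple_graph H"
    and psieq: "\<And>T A. T \<subseteq> A \<Longrightarrow> A \<subseteq> edges F \<Longrightarrow> psi F T A G = psi F T A H"
  shows "A \<subseteq> edges F \<Longrightarrow> card (betset F A G) = card (betset F A H)"
proof (induction "card (edges F - A)" arbitrary: A rule: less_induct)
  case less
  have finE: "finite (edges F)" by (rule simple_finite_edges[OF F])
  have finF: "finite (verts F)" using F unfolding simple_graph_def by auto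
  have finG: "finite (verts G)" using G unfolding simple_graph_def by auto
  have finH: "finite (verts H)" using H unfolding simple_graph_def by auto
  have finA: "finite A" using less.prems finE finite_subset by blast
  have gam: "card (gamset F A G) = card (gamset F A H)"
    using gam_psi[OF G finF finG finA] gam_psi[OF H finF finH finA] psieq less.prems by simp
  define Sup where "Sup = {B. A \<subseteq> B \<and> B \<subseteq> edges F}"
  have finS: "finite Sup" unfolding Sup_def by (rule finite_subset[of _ "Pow (edges F)"]) (use finE in auto)
  have AS: "A \<in> Sup" unfolding Sup_def using less.prems by auto
  have split: "card (gamset F A X) = card (betset F A X) + (\<Sum>B\<in>Sup - {A}. card (betset F B X))"
    if "finite (verts X)" for X :: "nat graph"
    using gam_bet[OF finF that finE less.prems] sum.remove[OF finS AS] unfolding Sup_def by simp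
  have rest: "(\<Sum>B\<in>Sup - {A}. card (betset F B G)) = (\<Sum>B\<in>Sup - {A}. card (betset F B H))"
  proof (rule sum.cong[OF refl])
    fix B assume B: "B \<in> Sup - {A}"
    then have AB: "A \<subset> B" "B \<subseteq> edges F" unfolding Sup_def by auto
    have "card (edges F - B) < card (edges F - A)"
      by (rule psubset_card_mono) (use finE AB in auto)
    then show "card (betset F B G) = card (betset F B H)" using less.hyps AB(2) by blast
  qed
  show ?case using gam split[OF finG] split[OF finH] rest by simp
qed

lemma forward:
  fixes Fc :: "nat graph set"
  assumes mc: "minor_closed Fc" and simpF: "\<forall>F\<in>Fc. simple_graph F"
    and G: "simple_graph G" and H: "simple_graph H" and eq: "hom_equiv Fc G H"
  shows "hom_equiv Fc (complement G) (complement H)"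
  unfolding hom_equiv_def
proof
  fix F assume F: "F \<in> Fc"
  have sF: "simple_graph F" using simpF F by blast
  have psieq: "psi F T A G = psi F T A H" if "T \<subseteq> A" "A \<subseteq> edges F" for T A
  proof -
    from psi_minor[OF sF that]
    show ?thesis
    proof
      assume z: "\<forall>X :: nat graph. simple_graph X \<longrightarrow> psi F T A X = 0"
      show ?thesis using z[rule_format, OF G] z[rule_format, OF H] by simp
    next
      assume "\<exists>M :: nat graph. simple_graph M \<and> is_minor M F \<and> (\<forall>X :: nat graph. psi F T A X = hom_count M X)"
      then obtain M :: "nat graph" where M: "simple_graph M" "is_minor M F" "\<forall>X :: nat graph. psi F T A X = hom_count M X"
        by blast
      have "M \<in> Fc" using mc F M(1,2) unfolding minor_closed_def by blast
      then have "hom_count M G = hom_count M H" using eq unfolding hom_equiv_def by blast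
      then show ?thesis using spec[OF M(3), of G] spec[OF M(3), of H] by simp
    qed
  qed
  show "hom_count F (complement G) = hom_count F (complement H)"
    using bet_invariant[OF sF G H psieq, of "{}"] bet_compl[OF sF, of G] bet_compl[OF sF, of H] by simp
qed


theorem theorem2:
  fixes \<F> :: "nat graph set"
  assumes "hom_dist_closed \<F>"
  shows "minor_closed \<F> \<longleftrightarrow>
    (\<forall>G H. simple_graph G \<longrightarrow> simple_graph H \<longrightarrow>
       (hom_equiv \<F> G H \<longleftrightarrow> hom_equiv \<F> (complement G) (complement H)))"
proof -
  have Fcl: "\<F> = hom_closure \<F>" using assms unfolding hom_dist_closed_def by simp
  have simpF: "\<forall>F\<in>\<F>. simple_graph F" using Fcl unfolding hom_closure_def by blast
  show ?thesis
  proof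
    assume mc: "minor_closed \<F>"
    show "\<forall>G H. simple_graph G \<longrightarrow> simple_graph H \<longrightarrow>
       (hom_equiv \<F> G H \<longleftrightarrow> hom_equiv \<F> (complement G) (complement H))"
    proof (intro allI impI iffI)
      fix G H :: "nat graph" assume G: "simple_graph G" and H: "simple_graph H"
      {
        assume "hom_equiv \<F> G H"
        then show "hom_equiv \<F> (complement G) (complement H)" by (rule forward[OF mc simpF G H])
      next
        assume "hom_equiv \<F> (complement G) (complement H)"
        then have "hom_equiv \<F> (complement (complement G)) (complement (complement H))"
          by (rule forward[OF mc simpF simple_complement[OF G] simple_complement[OF H]])
        then show "hom_equiv \<F> G H" using complement_complement[OF G] complement_complement[OF H] by simp
      }
    qed
  next
    assume c: "\<forall>G H. simple_graph G \<longrightarrow> simple_graph H \<longrightarrow>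
       (hom_equiv \<F> G H \<longleftrightarrow> hom_equiv \<F> (complement G) (complement H))"
    then have cp: "\<forall>G H. simple_graph G \<longrightarrow> simple_graph H \<longrightarrow> hom_equiv \<F> G H \<longrightarrow>
               hom_equiv \<F> (complement G) (complement H)" by blast
    show "minor_closed \<F>" unfolding minor_closed_def
      using minor_in_closure[OF assms cp] by blast
  qed
qed

end
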